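(* Let $\Gamma$ be a discrete group, $\Lambda\le\Gamma$ a subgroup, and $V$ a $\Lambda$-injective operator system. Then $\ell^\infty(\Gamma/\Lambda,V)$, with the induced $\Gamma$-action, is $\Gamma$-injective.
   Context: Fix a cross-section $\pi\colon\Gamma/\Lambda\to\Gamma$ with $\pi(\Lambda)=e$, and let $h(x,g)=\pi(gx)^{-1}g\pi(x)\in\Lambda$ for $x\in\Gamma/\Lambda$, $g\in\Gamma$. The induced action on $\ell^\infty(\Gamma/\Lambda,V)$ is $(gf)(x)=h(g^{-1}x,g)f(g^{-1}x)$. A $G$-operator system $W$ is $G$-injective if for every inclusion of $G$-operator systems $W_1\subset W_2$, every $G$-equivariant unital completely positive map $W_1\to W$ extends to a $G$-equivariant unital completely positive map $W_2\to W$. *)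

theory Defs
  imports Complex_Main "HOL-Algebra.Left_Coset"
begin

text \<open>An operator system is represented abstractly: a carrier set inside an ambient type,
  complex vector space operations, an involution, an order unit and a family of matrix cones
  (positive n x n matrices, n >= 1). Matrices are functions nat => nat => 'a, padded by
  zero outside the index range {0..<n} x {0..<n}.\<close>

record 'a opsys =
  ocarrier :: "'a set"
  oadd :: "'a \<Rightarrow> 'a \<Rightarrow> 'a"
  osmul :: "complex \<Rightarrow> 'a \<Rightarrow> 'a"
  ozero :: 'a
  oadj :: "'a \<Rightarrow> 'a"
  ounit :: 'a
  opos :: "nat \<Rightarrow> (nat \<Rightarrow> nat \<Rightarrow> 'a) set"

primrec vsum :: "'a opsys \<Rightarrow> (nat \<Rightarrow> 'a) \<Rightarrow> nat \<Rightarrow> 'a" where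
  "vsum S f 0 = ozero S"
| "vsum S f (Suc n) = oadd S (vsum S f n) (f n)"

definition mats :: "'a opsys \<Rightarrow> nat \<Rightarrow> (nat \<Rightarrow> nat \<Rightarrow> 'a) set" where
  "mats S n = {X. (\<forall>i j. (i < n \<and> j < n \<longrightarrow> X i j \<in> ocarrier S)
                     \<and> (\<not> (i < n \<and> j < n) \<longrightarrow> X i j = ozero S))}"

definition mzero :: "'a opsys \<Rightarrow> nat \<Rightarrow> nat \<Rightarrow> 'a" where
  "mzero S = (\<lambda>i j. ozero S)"

definition madd :: "'a opsys \<Rightarrow> nat \<Rightarrow> (nat \<Rightarrow> nat \<Rightarrow> 'a) \<Rightarrow> (nat \<Rightarrow> nat \<Rightarrow> 'a) \<Rightarrow> nat \<Rightarrow> nat \<Rightarrow> 'a" where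
  "madd S n X Y = (\<lambda>i j. if i < n \<and> j < n then oadd S (X i j) (Y i j) else ozero S)"

definition msmul :: "'a opsys \<Rightarrow> nat \<Rightarrow> complex \<Rightarrow> (nat \<Rightarrow> nat \<Rightarrow> 'a) \<Rightarrow> nat \<Rightarrow> nat \<Rightarrow> 'a" where
  "msmul S n c X = (\<lambda>i j. if i < n \<and> j < n then osmul S c (X i j) else ozero S)"

definition madj :: "'a opsys \<Rightarrow> nat \<Rightarrow> (nat \<Rightarrow> nat \<Rightarrow> 'a) \<Rightarrow> nat \<Rightarrow> nat \<Rightarrow> 'a" where
  "madj S n X = (\<lambda>i j. if i < n \<and> j < n then oadj S (X j i) else ozero S)"

definition meye :: "'a opsys \<Rightarrow> nat \<Rightarrow> real \<Rightarrow> nat \<Rightarrow> nat \<Rightarrow> 'a" where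
  "meye S n r = (\<lambda>i j. if i < n \<and> j < n \<and> i = j then osmul S (complex_of_real r) (ounit S) else ozero S)"

definition mconj :: "'a opsys \<Rightarrow> (nat \<Rightarrow> nat \<Rightarrow> complex) \<Rightarrow> nat \<Rightarrow> nat \<Rightarrow> (nat \<Rightarrow> nat \<Rightarrow> 'a) \<Rightarrow> nat \<Rightarrow> nat \<Rightarrow> 'a" where
  "mconj S \<alpha> n m X = (\<lambda>k l. if k < m \<and> l < m then
      vsum S (\<lambda>i. vsum S (\<lambda>j. osmul S (cnj (\<alpha> i k) * \<alpha> j l) (X i j)) n) n else ozero S)"

definition operator_system :: "'a opsys \<Rightarrow> bool" where
  "operator_system S \<longleftrightarrow>
     ozero S \<in> ocarrier S \<and> ounit S \<in> ocarrier S
   \<and> (\<forall>x\<in>ocarrier S. \<forall>y\<in>ocarrier S. oadd S x y \<in> ocarrier S)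
   \<and> (\<forall>c. \<forall>x\<in>ocarrier S. osmul S c x \<in> ocarrier S)
   \<and> (\<forall>x\<in>ocarrier S. oadj S x \<in> ocarrier S)
   \<and> (\<forall>x\<in>ocarrier S. \<forall>y\<in>ocarrier S. \<forall>z\<in>ocarrier S. oadd S (oadd S x y) z = oadd S x (oadd S y z))
   \<and> (\<forall>x\<in>ocarrier S. \<forall>y\<in>ocarrier S. oadd S x y = oadd S y x)
   \<and> (\<forall>x\<in>ocarrier S. oadd S (ozero S) x = x)
   \<and> (\<forall>x\<in>ocarrier S. oadd S x (osmul S (-1) x) = ozero S)
   \<and> (\<forall>x\<in>ocarrier S. osmul S 1 x = x)
   \<and> (\<forall>a b. \<forall>x\<in>ocarrier S. osmul S a (osmul S b x) = osmul S (a * b) x)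
   \<and> (\<forall>a b. \<forall>x\<in>ocarrier S. osmul S (a + b) x = oadd S (osmul S a x) (osmul S b x))
   \<and> (\<forall>a. \<forall>x\<in>ocarrier S. \<forall>y\<in>ocarrier S. osmul S a (oadd S x y) = oadd S (osmul S a x) (osmul S a y))
   \<and> (\<forall>x\<in>ocarrier S. oadj S (oadj S x) = x)
   \<and> (\<forall>x\<in>ocarrier S. \<forall>y\<in>ocarrier S. oadj S (oadd S x y) = oadd S (oadj S x) (oadj S y))
   \<and> (\<forall>c. \<forall>x\<in>ocarrier S. oadj S (osmul S c x) = osmul S (cnj c) (oadj S x))
   \<and> oadj S (ounit S) = ounit S
   \<and> (\<forall>n>0. opos S n \<subseteq> mats S n)
   \<and> (\<forall>n>0. \<forall>X\<in>opos S n. madj S n X = X)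
   \<and> (\<forall>n>0. \<forall>X\<in>opos S n. \<forall>Y\<in>opos S n. madd S n X Y \<in> opos S n)
   \<and> (\<forall>n>0. \<forall>X\<in>opos S n. \<forall>r::real. r \<ge> 0 \<longrightarrow> msmul S n (complex_of_real r) X \<in> opos S n)
   \<and> (\<forall>n>0. \<forall>X\<in>opos S n. msmul S n (-1) X \<in> opos S n \<longrightarrow> X = mzero S)
   \<and> (\<forall>n>0. \<forall>m>0. \<forall>X\<in>opos S n. \<forall>\<alpha>. mconj S \<alpha> n m X \<in> opos S m)
   \<and> (\<forall>n>0. \<forall>X\<in>mats S n. madj S n X = X \<longrightarrow>
          (\<exists>r::real. r > 0 \<and> madd S n (meye S n r) X \<in> opos S n))
   \<and> (\<forall>n>0. \<forall>X\<in>mats S n. madj S n X = X \<longrightarrow>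
          (\<forall>r::real. r > 0 \<longrightarrow> madd S n (meye S n r) X \<in> opos S n) \<longrightarrow> X \<in> opos S n)"

definition mmap :: "'b opsys \<Rightarrow> nat \<Rightarrow> ('a \<Rightarrow> 'b) \<Rightarrow> (nat \<Rightarrow> nat \<Rightarrow> 'a) \<Rightarrow> nat \<Rightarrow> nat \<Rightarrow> 'b" where
  "mmap T n \<phi> X = (\<lambda>i j. if i < n \<and> j < n then \<phi> (X i j) else ozero T)"

definition ucp :: "'a opsys \<Rightarrow> 'b opsys \<Rightarrow> ('a \<Rightarrow> 'b) \<Rightarrow> bool" where
  "ucp S T \<phi> \<longleftrightarrow>
     (\<forall>x\<in>ocarrier S. \<phi> x \<in> ocarrier T)
   \<and> (\<forall>x\<in>ocarrier S. \<forall>y\<in>ocarrier S. \<phi> (oadd S x y) = oadd T (\<phi> x) (\<phi> y))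
   \<and> (\<forall>c. \<forall>x\<in>ocarrier S. \<phi> (osmul S c x) = osmul T c (\<phi> x))
   \<and> \<phi> (ounit S) = ounit T
   \<and> (\<forall>n>0. \<forall>X\<in>opos S n. mmap T n \<phi> X \<in> opos T n)"

definition subsystem :: "'a opsys \<Rightarrow> 'a opsys \<Rightarrow> bool" where
  "subsystem W1 W2 \<longleftrightarrow> ocarrier W1 \<subseteq> ocarrier W2
   \<and> oadd W1 = oadd W2 \<and> osmul W1 = osmul W2 \<and> ozero W1 = ozero W2
   \<and> oadj W1 = oadj W2 \<and> ounit W1 = ounit W2
   \<and> (\<forall>n>0. opos W1 n = opos W2 n \<inter> mats W1 n)"

text \<open>A G-operator system: G acts by unital complete order automorphisms (each act g is ucp;
  together with the action laws, act (inv g) is a ucp inverse).\<close>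
definition G_opsys :: "('g, 'm) monoid_scheme \<Rightarrow> 'a opsys \<Rightarrow> ('g \<Rightarrow> 'a \<Rightarrow> 'a) \<Rightarrow> bool" where
  "G_opsys G S act \<longleftrightarrow> operator_system S
   \<and> (\<forall>g\<in>carrier G. ucp S S (act g))
   \<and> (\<forall>x\<in>ocarrier S. act \<one>\<^bsub>G\<^esub> x = x)
   \<and> (\<forall>g\<in>carrier G. \<forall>h\<in>carrier G. \<forall>x\<in>ocarrier S. act (g \<otimes>\<^bsub>G\<^esub> h) x = act g (act h x))"

definition equivariant :: "('g, 'm) monoid_scheme \<Rightarrow> 'a opsys \<Rightarrow> ('g \<Rightarrow> 'a \<Rightarrow> 'a) \<Rightarrow> ('g \<Rightarrow> 'b \<Rightarrow> 'b) \<Rightarrow> ('a \<Rightarrow> 'b) \<Rightarrow> bool" where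
  "equivariant G S actS actT \<phi> \<longleftrightarrow> (\<forall>g\<in>carrier G. \<forall>x\<in>ocarrier S. \<phi> (actS g x) = actT g (\<phi> x))"

text \<open>G-injectivity, relative to G-operator systems W1 \<subseteq> W2 living in the ambient type 'w
  (HOL cannot quantify over types inside a formula; the type 'w is a parameter).\<close>
definition G_injective :: "('g, 'm) monoid_scheme \<Rightarrow> 'v opsys \<Rightarrow> ('g \<Rightarrow> 'v \<Rightarrow> 'v) \<Rightarrow> 'w itself \<Rightarrow> bool" where
  "G_injective G V actV (_ :: 'w itself) \<longleftrightarrow> G_opsys G V actV \<and>
     (\<forall>(W1 :: 'w opsys) W2 act \<phi>.
        G_opsys G W1 act \<and> G_opsys G W2 act \<and> subsystem W1 W2
        \<and> ucp W1 V \<phi> \<and> equivariant G W1 act actV \<phi>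
        \<longrightarrow> (\<exists>\<psi>. ucp W2 V \<psi> \<and> equivariant G W2 act actV \<psi> \<and> (\<forall>x\<in>ocarrier W1. \<psi> x = \<phi> x)))"

text \<open>Bounded: there is r with [[r e, v],[v^*, r e]] >= 0, i.e. norm of v is at most r.\<close>
definition bmat :: "'v opsys \<Rightarrow> real \<Rightarrow> 'v \<Rightarrow> nat \<Rightarrow> nat \<Rightarrow> 'v" where
  "bmat V r v = (\<lambda>i j. if i = 0 \<and> j = 0 then osmul V (complex_of_real r) (ounit V)
                  else if i = 0 \<and> j = 1 then v
                  else if i = 1 \<and> j = 0 then oadj V v
                  else if i = 1 \<and> j = 1 then osmul V (complex_of_real r) (ounit V)
                  else ozero V)"

text \<open>Gamma/Lambda is the set of left cosets g Lambda; functions are extended by 0 outside it.\<close>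
definition linf :: "('g, 'm) monoid_scheme \<Rightarrow> 'g set \<Rightarrow> 'v opsys \<Rightarrow> ('g set \<Rightarrow> 'v) opsys" where
  "linf G H V = \<lparr>
     ocarrier = {f. (\<forall>x\<in>lcosets\<^bsub>G\<^esub> H. f x \<in> ocarrier V)
                  \<and> (\<forall>x. x \<notin> lcosets\<^bsub>G\<^esub> H \<longrightarrow> f x = ozero V)
                  \<and> (\<exists>r::real. \<forall>x\<in>lcosets\<^bsub>G\<^esub> H. bmat V r (f x) \<in> opos V 2)},
     oadd = (\<lambda>f g x. oadd V (f x) (g x)),
     osmul = (\<lambda>c f x. osmul V c (f x)),
     ozero = (\<lambda>x. ozero V),
     oadj = (\<lambda>f x. oadj V (f x)),
     ounit = (\<lambda>x. if x \<in> lcosets\<^bsub>G\<^esub> H then ounit V else ozero V),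
     opos = (\<lambda>n. {F. (\<forall>i j. (i < n \<and> j < n \<longrightarrow>
                              F i j \<in> {f. (\<forall>x\<in>lcosets\<^bsub>G\<^esub> H. f x \<in> ocarrier V)
                                        \<and> (\<forall>x. x \<notin> lcosets\<^bsub>G\<^esub> H \<longrightarrow> f x = ozero V)
                                        \<and> (\<exists>r::real. \<forall>x\<in>lcosets\<^bsub>G\<^esub> H. bmat V r (f x) \<in> opos V 2)})
                            \<and> (\<not> (i < n \<and> j < n) \<longrightarrow> F i j = (\<lambda>x. ozero V)))
                     \<and> (\<forall>x\<in>lcosets\<^bsub>G\<^esub> H. (\<lambda>i j. F i j x) \<in> opos V n)})
   \<rparr>"

definition cocycle :: "('g, 'm) monoid_scheme \<Rightarrow> ('g set \<Rightarrow> 'g) \<Rightarrow> 'g set \<Rightarrow> 'g \<Rightarrow> 'g" where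
  "cocycle G \<pi> x g = inv\<^bsub>G\<^esub> (\<pi> (g <#\<^bsub>G\<^esub> x)) \<otimes>\<^bsub>G\<^esub> g \<otimes>\<^bsub>G\<^esub> \<pi> x"

definition ind_act :: "('g, 'm) monoid_scheme \<Rightarrow> 'g set \<Rightarrow> ('g set \<Rightarrow> 'g) \<Rightarrow> 'v opsys
                        \<Rightarrow> ('g \<Rightarrow> 'v \<Rightarrow> 'v) \<Rightarrow> 'g \<Rightarrow> ('g set \<Rightarrow> 'v) \<Rightarrow> 'g set \<Rightarrow> 'v" where
  "ind_act G H \<pi> V actV g f = (\<lambda>x. if x \<in> lcosets\<^bsub>G\<^esub> H then
       actV (cocycle G \<pi> (inv\<^bsub>G\<^esub> g <#\<^bsub>G\<^esub> x) g) (f (inv\<^bsub>G\<^esub> g <#\<^bsub>G\<^esub> x)) else ozero V)"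

end

theory Submission
  imports Defs "HOL-Algebra.FiniteProduct"
begin



locale osys = fixes S :: "'a opsys" assumes os: "operator_system S"
begin

lemmas ax0 = os[unfolded operator_system_def, THEN conjunct1]
lemmas ax1 = os[unfolded operator_system_def, THEN conjunct2, THEN conjunct1]
lemmas ax2 = os[unfolded operator_system_def, THEN conjunct2, THEN conjunct2, THEN conjunct1]
lemmas ax3 = os[unfolded operator_system_def, THEN conjunct2, THEN conjunct2, THEN conjunct2, THEN conjunct1]
lemmas ax4 = os[unfolded operator_system_def, THEN conjunct2, THEN conjunct2, THEN conjunct2, THEN conjunct2, THEN conjunct1]
lemmas ax5 = os[unfolded operator_system_def, THEN conjunct2, THEN conjunct2, THEN conjunct2, THEN conjunct2, THEN conjunct2, THEN conjunct1]
lemmas ax6 = os[unfolded operator_system_def, THEN conjunct2, THEN conjunct2, THEN conjunct2, THEN conjunct2, THEN conjunct2, THEN conjunct2, THEN conjunct1]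
lemmas ax7 = os[unfolded operator_system_def, THEN conjunct2, THEN conjunct2, THEN conjunct2, THEN conjunct2, THEN conjunct2, THEN conjunct2, THEN conjunct2, THEN conjunct1]
lemmas ax8 = os[unfolded operator_system_def, THEN conjunct2, THEN conjunct2, THEN conjunct2, THEN conjunct2, THEN conjunct2, THEN conjunct2, THEN conjunct2, THEN conjunct2, THEN conjunct1]
lemmas ax9 = os[unfolded operator_system_def, THEN conjunct2, THEN conjunct2, THEN conjunct2, THEN conjunct2, THEN conjunct2, THEN conjunct2, THEN conjunct2, THEN conjunct2, THEN conjunct2, THEN conjunct1]
lemmas ax10 = os[unfolded operator_system_def, THEN conjunct2, THEN conjunct2, THEN conjunct2, THEN conjunct2, THEN conjunct2, THEN conjunct2, THEN conjunct2, THEN conjunct2, THEN conjunct2, THEN conjunct2, THEN conjunct1]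
lemmas ax11 = os[unfolded operator_system_def, THEN conjunct2, THEN conjunct2, THEN conjunct2, THEN conjunct2, THEN conjunct2, THEN conjunct2, THEN conjunct2, THEN conjunct2, THEN conjunct2, THEN conjunct2, THEN conjunct2, THEN conjunct1]
lemmas ax12 = os[unfolded operator_system_def, THEN conjunct2, THEN conjunct2, THEN conjunct2, THEN conjunct2, THEN conjunct2, THEN conjunct2, THEN conjunct2, THEN conjunct2, THEN conjunct2, THEN conjunct2, THEN conjunct2, THEN conjunct2, THEN conjunct1]
lemmas ax13 = os[unfolded operator_system_def, THEN conjunct2, THEN conjunct2, THEN conjunct2, THEN conjunct2, THEN conjunct2, THEN conjunct2, THEN conjunct2, THEN conjunct2, THEN conjunct2, THEN conjunct2, THEN conjunct2, THEN conjunct2, THEN conjunct2, THEN conjunct1]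
lemmas ax14 = os[unfolded operator_system_def, THEN conjunct2, THEN conjunct2, THEN conjunct2, THEN conjunct2, THEN conjunct2, THEN conjunct2, THEN conjunct2, THEN conjunct2, THEN conjunct2, THEN conjunct2, THEN conjunct2, THEN conjunct2, THEN conjunct2, THEN conjunct2, THEN conjunct1]
lemmas ax15 = os[unfolded operator_system_def, THEN conjunct2, THEN conjunct2, THEN conjunct2, THEN conjunct2, THEN conjunct2, THEN conjunct2, THEN conjunct2, THEN conjunct2, THEN conjunct2, THEN conjunct2, THEN conjunct2, THEN conjunct2, THEN conjunct2, THEN conjunct2, THEN conjunct2, THEN conjunct1]
lemmas ax16 = os[unfolded operator_system_def, THEN conjunct2, THEN conjunct2, THEN conjunct2, THEN conjunct2, THEN conjunct2, THEN conjunct2, THEN conjunct2, THEN conjunct2, THEN conjunct2, THEN conjunct2, THEN conjunct2, THEN conjunct2, THEN conjunct2, THEN conjunct2, THEN conjunct2, THEN conjunct2, THEN conjunct1]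
lemmas ax17 = os[unfolded operator_system_def, THEN conjunct2, THEN conjunct2, THEN conjunct2, THEN conjunct2, THEN conjunct2, THEN conjunct2, THEN conjunct2, THEN conjunct2, THEN conjunct2, THEN conjunct2, THEN conjunct2, THEN conjunct2, THEN conjunct2, THEN conjunct2, THEN conjunct2, THEN conjunct2, THEN conjunct2, THEN conjunct1]
lemmas ax18 = os[unfolded operator_system_def, THEN conjunct2, THEN conjunct2, THEN conjunct2, THEN conjunct2, THEN conjunct2, THEN conjunct2, THEN conjunct2, THEN conjunct2, THEN conjunct2, THEN conjunct2, THEN conjunct2, THEN conjunct2, THEN conjunct2, THEN conjunct2, THEN conjunct2, THEN conjunct2, THEN conjunct2, THEN conjunct2, THEN conjunct1]
lemmas ax19 = os[unfolded operator_system_def, THEN conjunct2, THEN conjunct2, THEN conjunct2, THEN conjunct2, THEN conjunct2, THEN conjunct2, THEN conjunct2, THEN conjunct2, THEN conjunct2, THEN conjunct2, THEN conjunct2, THEN conjunct2, THEN conjunct2, THEN conjunct2, THEN conjunct2, THEN conjunct2, THEN conjunct2, THEN conjunct2, THEN conjunct2, THEN conjunct1]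
lemmas ax20 = os[unfolded operator_system_def, THEN conjunct2, THEN conjunct2, THEN conjunct2, THEN conjunct2, THEN conjunct2, THEN conjunct2, THEN conjunct2, THEN conjunct2, THEN conjunct2, THEN conjunct2, THEN conjunct2, THEN conjunct2, THEN conjunct2, THEN conjunct2, THEN conjunct2, THEN conjunct2, THEN conjunct2, THEN conjunct2, THEN conjunct2, THEN conjunct2, THEN conjunct1]
lemmas ax21 = os[unfolded operator_system_def, THEN conjunct2, THEN conjunct2, THEN conjunct2, THEN conjunct2, THEN conjunct2, THEN conjunct2, THEN conjunct2, THEN conjunct2, THEN conjunct2, THEN conjunct2, THEN conjunct2, THEN conjunct2, THEN conjunct2, THEN conjunct2, THEN conjunct2, THEN conjunct2, THEN conjunct2, THEN conjunct2, THEN conjunct2, THEN conjunct2, THEN conjunct2, THEN conjunct1]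
lemmas ax22 = os[unfolded operator_system_def, THEN conjunct2, THEN conjunct2, THEN conjunct2, THEN conjunct2, THEN conjunct2, THEN conjunct2, THEN conjunct2, THEN conjunct2, THEN conjunct2, THEN conjunct2, THEN conjunct2, THEN conjunct2, THEN conjunct2, THEN conjunct2, THEN conjunct2, THEN conjunct2, THEN conjunct2, THEN conjunct2, THEN conjunct2, THEN conjunct2, THEN conjunct2, THEN conjunct2, THEN conjunct1]
lemmas ax23 = os[unfolded operator_system_def, THEN conjunct2, THEN conjunct2, THEN conjunct2, THEN conjunct2, THEN conjunct2, THEN conjunct2, THEN conjunct2, THEN conjunct2, THEN conjunct2, THEN conjunct2, THEN conjunct2, THEN conjunct2, THEN conjunct2, THEN conjunct2, THEN conjunct2, THEN conjunct2, THEN conjunct2, THEN conjunct2, THEN conjunct2, THEN conjunct2, THEN conjunct2, THEN conjunct2, THEN conjunct2, THEN conjunct1]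
lemmas ax24 = os[unfolded operator_system_def, THEN conjunct2, THEN conjunct2, THEN conjunct2, THEN conjunct2, THEN conjunct2, THEN conjunct2, THEN conjunct2, THEN conjunct2, THEN conjunct2, THEN conjunct2, THEN conjunct2, THEN conjunct2, THEN conjunct2, THEN conjunct2, THEN conjunct2, THEN conjunct2, THEN conjunct2, THEN conjunct2, THEN conjunct2, THEN conjunct2, THEN conjunct2, THEN conjunct2, THEN conjunct2, THEN conjunct2]

lemma zero_c[simp]: "ozero S \<in> ocarrier S" and unit_c[simp]: "ounit S \<in> ocarrier S"
  using ax0 ax1 by simp_all
lemma add_c[simp]: "x \<in> ocarrier S \<Longrightarrow> y \<in> ocarrier S \<Longrightarrow> oadd S x y \<in> ocarrier S"
  using ax2 by blast
lemma smul_c[simp]: "x \<in> ocarrier S \<Longrightarrow> osmul S c x \<in> ocarrier S"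
  using ax3 by blast
lemma adj_c[simp]: "x \<in> ocarrier S \<Longrightarrow> oadj S x \<in> ocarrier S"
  using ax4 by blast
lemma add_assoc: "x \<in> ocarrier S \<Longrightarrow> y \<in> ocarrier S \<Longrightarrow> z \<in> ocarrier S \<Longrightarrow> oadd S (oadd S x y) z = oadd S x (oadd S y z)"
  using ax5 by blast
lemma add_comm: "x \<in> ocarrier S \<Longrightarrow> y \<in> ocarrier S \<Longrightarrow> oadd S x y = oadd S y x"
  using ax6 by blast
lemma zero_add[simp]: "x \<in> ocarrier S \<Longrightarrow> oadd S (ozero S) x = x"
  using ax7 by blast
lemma add_neg: "x \<in> ocarrier S \<Longrightarrow> oadd S x (osmul S (-1) x) = ozero S"
  using ax8 by blast
lemma smul_one[simp]: "x \<in> ocarrier S \<Longrightarrow> osmul S 1 x = x"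
  using ax9 by blast
lemma smul_smul[simp]: "x \<in> ocarrier S \<Longrightarrow> osmul S a (osmul S b x) = osmul S (a * b) x"
  using ax10 by blast
lemma smul_add_left: "x \<in> ocarrier S \<Longrightarrow> osmul S (a + b) x = oadd S (osmul S a x) (osmul S b x)"
  using ax11 by blast
lemma smul_add_right: "x \<in> ocarrier S \<Longrightarrow> y \<in> ocarrier S \<Longrightarrow> osmul S a (oadd S x y) = oadd S (osmul S a x) (osmul S a y)"
  using ax12 by blast
lemma adj_adj[simp]: "x \<in> ocarrier S \<Longrightarrow> oadj S (oadj S x) = x"
  using ax13 by blast
lemma adj_add: "x \<in> ocarrier S \<Longrightarrow> y \<in> ocarrier S \<Longrightarrow> oadj S (oadd S x y) = oadd S (oadj S x) (oadj S y)"
  using ax14 by blast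
lemma adj_smul: "x \<in> ocarrier S \<Longrightarrow> oadj S (osmul S c x) = osmul S (cnj c) (oadj S x)"
  using ax15 by blast
lemma adj_unit[simp]: "oadj S (ounit S) = ounit S"
  using ax16 by blast
lemma pos_mats: "n > 0 \<Longrightarrow> X \<in> opos S n \<Longrightarrow> X \<in> mats S n"
  using ax17 by blast
lemma pos_sa: "n > 0 \<Longrightarrow> X \<in> opos S n \<Longrightarrow> madj S n X = X"
  using ax18 by blast
lemma pos_add: "n > 0 \<Longrightarrow> X \<in> opos S n \<Longrightarrow> Y \<in> opos S n \<Longrightarrow> madd S n X Y \<in> opos S n"
  using ax19 by blast
lemma pos_smul: "n > 0 \<Longrightarrow> X \<in> opos S n \<Longrightarrow> r \<ge> 0 \<Longrightarrow> msmul S n (complex_of_real r) X \<in> opos S n"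
  using ax20 by blast
lemma pos_anti: "n > 0 \<Longrightarrow> X \<in> opos S n \<Longrightarrow> msmul S n (-1) X \<in> opos S n \<Longrightarrow> X = mzero S"
  using ax21 by blast
lemma pos_conj: "n > 0 \<Longrightarrow> m > 0 \<Longrightarrow> X \<in> opos S n \<Longrightarrow> mconj S \<alpha> n m X \<in> opos S m"
  using ax22 by blast
lemma arch: "n > 0 \<Longrightarrow> X \<in> mats S n \<Longrightarrow> madj S n X = X \<Longrightarrow> \<exists>r::real. r > 0 \<and> madd S n (meye S n r) X \<in> opos S n"
  using ax23 by blast
lemma closed: "n > 0 \<Longrightarrow> X \<in> mats S n \<Longrightarrow> madj S n X = X \<Longrightarrow>
     (\<forall>r::real. r > 0 \<longrightarrow> madd S n (meye S n r) X \<in> opos S n) \<Longrightarrow> X \<in> opos S n"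
  using ax24 by blast

lemma add_zero[simp]: "x \<in> ocarrier S \<Longrightarrow> oadd S x (ozero S) = x"
  using add_comm[of x "ozero S"] by simp

lemma smul_zero_left[simp]: "x \<in> ocarrier S \<Longrightarrow> osmul S 0 x = ozero S"
proof -
  assume x: "x \<in> ocarrier S"
  define a where "a = osmul S 0 x"
  have ac: "a \<in> ocarrier S" using x by (simp add: a_def)
  have "a = oadd S a a" using smul_add_left[OF x, of 0 0] by (simp add: a_def)
  hence "oadd S a (osmul S (-1) a) = oadd S (oadd S a a) (osmul S (-1) a)" by simp
  also have "... = oadd S a (oadd S a (osmul S (-1) a))" using ac by (simp add: add_assoc)
  finally show ?thesis using ac by (simp add: add_neg a_def)
qed

lemma smul_zero_right[simp]: "osmul S c (ozero S) = ozero S"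
  using smul_smul[of "ozero S" c 0] smul_zero_left[of "ozero S"] by simp

lemma adj_zero[simp]: "oadj S (ozero S) = ozero S"
  using adj_smul[of "ozero S" 0] by simp

lemma add_lcomm: "x \<in> ocarrier S \<Longrightarrow> y \<in> ocarrier S \<Longrightarrow> z \<in> ocarrier S \<Longrightarrow> oadd S x (oadd S y z) = oadd S y (oadd S x z)"
  by (metis add_assoc add_comm)

lemmas add_ac = add_assoc add_comm add_lcomm

end



context osys begin

lemma mats_in: "X \<in> mats S n \<Longrightarrow> i < n \<Longrightarrow> j < n \<Longrightarrow> X i j \<in> ocarrier S"
  by (simp add: mats_def)
lemma mats_out: "X \<in> mats S n \<Longrightarrow> \<not> (i < n \<and> j < n) \<Longrightarrow> X i j = ozero S"
  by (simp add: mats_def)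
lemma mats_eqI: "X \<in> mats S n \<Longrightarrow> Y \<in> mats S n \<Longrightarrow> (\<And>i j. i < n \<Longrightarrow> j < n \<Longrightarrow> X i j = Y i j) \<Longrightarrow> X = Y"
  by (rule ext, rule ext) (metis mats_out)

lemma mzero_mats: "mzero S \<in> mats S n" by (simp add: mats_def mzero_def)
lemma madj_mzero: "madj S n (mzero S) = mzero S" by (intro ext) (auto simp: madj_def mzero_def)
lemma meye_mats: "meye S n r \<in> mats S n" by (simp add: mats_def meye_def)
lemma madd_mats: "X \<in> mats S n \<Longrightarrow> Y \<in> mats S n \<Longrightarrow> madd S n X Y \<in> mats S n"
  by (simp add: mats_def madd_def)
lemma msmul_mats: "X \<in> mats S n \<Longrightarrow> msmul S n c X \<in> mats S n"
  by (simp add: mats_def msmul_def)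
lemma madj_mats: "X \<in> mats S n \<Longrightarrow> madj S n X \<in> mats S n"
  by (simp add: mats_def madj_def)

lemma pos_in: "X \<in> opos S n \<Longrightarrow> n > 0 \<Longrightarrow> i < n \<Longrightarrow> j < n \<Longrightarrow> X i j \<in> ocarrier S"
  using pos_mats mats_in by blast
lemma pos_out: "X \<in> opos S n \<Longrightarrow> n > 0 \<Longrightarrow> \<not> (i < n \<and> j < n) \<Longrightarrow> X i j = ozero S"
  using pos_mats mats_out by blast

lemma madd_meye_zero: "madd S n (meye S n r) (mzero S) = meye S n r"
  by (intro ext) (auto simp: madd_def meye_def mzero_def)

lemma exists_meye_pos: "n > 0 \<Longrightarrow> \<exists>r>0. meye S n r \<in> opos S n"
  using arch[OF _ mzero_mats madj_mzero] madd_meye_zero by metis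

lemma msmul_meye: "msmul S n (complex_of_real a) (meye S n b) = meye S n (a * b)"
  by (intro ext) (auto simp: msmul_def meye_def)

lemma meye_pos: assumes "n > 0" "t \<ge> 0" shows "meye S n t \<in> opos S n"
proof -
  obtain r where r: "r > 0" "meye S n r \<in> opos S n" using exists_meye_pos[OF assms(1)] by blast
  have "msmul S n (complex_of_real (t / r)) (meye S n r) \<in> opos S n"
    using pos_smul[OF assms(1) r(2), of "t / r"] r(1) assms(2) by (simp del: of_real_divide)
  thus ?thesis using r(1) by (simp add: msmul_meye del: of_real_divide)
qed

lemma mzero_pos: assumes "n > 0" shows "mzero S \<in> opos S n"
proof -
  have "msmul S n (complex_of_real 0) (meye S n 0) = mzero S"
    by (intro ext) (auto simp: msmul_def meye_def mzero_def)
  thus ?thesis using pos_smul[OF assms meye_pos[OF assms order_refl], of 0] by simp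
qed

lemma madd_meye_meye: "X \<in> mats S n \<Longrightarrow>
   madd S n (meye S n a) (madd S n (meye S n b) X) = madd S n (meye S n (a + b)) X"
  by (rule ext, rule ext) (auto simp: madd_def meye_def mats_def smul_add_left add_assoc)

lemma meye_mono: assumes "n > 0" "X \<in> mats S n" "madd S n (meye S n r) X \<in> opos S n" "r \<le> r'"
  shows "madd S n (meye S n r') X \<in> opos S n"
proof -
  have "madd S n (meye S n (r' - r)) (madd S n (meye S n r) X) \<in> opos S n"
    using pos_add[OF assms(1) meye_pos[OF assms(1)] assms(3)] assms(4) by simp
  thus ?thesis using madd_meye_meye[OF assms(2)] by simp
qed

lemma bmat_mats: "x \<in> ocarrier S \<Longrightarrow> bmat S R x \<in> mats S 2"
  by (simp add: mats_def bmat_def)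

lemma bmat_as_meye: "x \<in> ocarrier S \<Longrightarrow>
   bmat S R x = madd S 2 (meye S 2 R) (\<lambda>i j. if i = 0 \<and> j = 1 then x else if i = 1 \<and> j = 0 then oadj S x else ozero S)"
  by (rule ext, rule ext) (auto simp: madd_def meye_def bmat_def)

lemma bmat_mono: assumes "x \<in> ocarrier S" "bmat S R x \<in> opos S 2" "R \<le> R'"
  shows "bmat S R' x \<in> opos S 2"
  using meye_mono[of 2 "(\<lambda>i j. if i = 0 \<and> j = 1 then x else if i = 1 \<and> j = 0 then oadj S x else ozero S)" R R']
    assms bmat_as_meye[OF assms(1)] by (simp add: mats_def)

lemma vsum2: "vsum S f 2 = oadd S (oadd S (ozero S) (f 0)) (f 1)"
  by (simp add: numeral_2_eq_2)

end



definition addmon :: "'a opsys \<Rightarrow> 'a monoid" where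
  "addmon S = \<lparr>carrier = ocarrier S, mult = oadd S, one = ozero S\<rparr>"

lemma addmon_simps[simp]: "carrier (addmon S) = ocarrier S" "mult (addmon S) = oadd S" "one (addmon S) = ozero S"
  by (simp_all add: addmon_def)

lemma (in osys) addmon_cm: "comm_monoid (addmon S)"
  by unfold_locales (auto simp: add_assoc intro: add_comm)

sublocale osys \<subseteq> AM: comm_monoid "addmon S"
  by (rule addmon_cm)

definition msumset :: "'a opsys \<Rightarrow> nat \<Rightarrow> ('p \<Rightarrow> nat \<Rightarrow> nat \<Rightarrow> 'a) \<Rightarrow> 'p set \<Rightarrow> nat \<Rightarrow> nat \<Rightarrow> 'a" where
  "msumset S n P A = (\<lambda>k l. if k < n \<and> l < n then finprod (addmon S) (\<lambda>p. P p k l) A else ozero S)"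

context osys begin

lemma msumset_pos: assumes "finite A" "n > 0" "\<forall>p\<in>A. P p \<in> opos S n"
  shows "msumset S n P A \<in> opos S n"
  using assms(1,3)
proof (induction A rule: finite_induct)
  case empty
  have "msumset S n P {} = mzero S" by (intro ext) (simp add: msumset_def mzero_def)
  then show ?case using mzero_pos[OF assms(2)] by simp
next
  case (insert a F)
  have "msumset S n P (insert a F) = madd S n (P a) (msumset S n P F)"
  proof (intro ext)
    fix k l
    show "msumset S n P (insert a F) k l = madd S n (P a) (msumset S n P F) k l"
    proof (cases "k < n \<and> l < n")
      case True
      have "(\<lambda>p. P p k l) \<in> F \<rightarrow> ocarrier S" using insert.prems True assms(2) pos_in by blast
      moreover have "P a k l \<in> ocarrier S" using insert.prems True assms(2) pos_in by blast
      ultimately show ?thesis using True insert.hyps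
        by (simp add: msumset_def madd_def AM.finprod_insert)
    qed (auto simp add: msumset_def madd_def)
  qed
  then show ?case using pos_add[OF assms(2)] insert by simp
qed

lemma pow_smul: "x \<in> ocarrier S \<Longrightarrow> x [^]\<^bsub>addmon S\<^esub> (m::nat) = osmul S (of_nat m) x"
proof (induction m)
  case 0 then show ?case by simp
next
  case (Suc m)
  then show ?case by (simp add: smul_add_left add_comm)
qed

definition al :: "nat \<Rightarrow> nat \<Rightarrow> nat \<Rightarrow> nat \<Rightarrow> complex" where
  "al i j = (\<lambda>a k. if (a = 0 \<and> k = i) \<or> (a = 1 \<and> k = j) then 1 else 0)"

lemma mconj_al: assumes "x \<in> ocarrier S" "k < n" "l < n"
  shows "mconj S (al i j) 2 n (bmat S R x) k l =
    oadd S (oadd S (if k = i \<and> l = i then osmul S (complex_of_real R) (ounit S) else ozero S)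
                   (if k = i \<and> l = j then x else ozero S))
           (oadd S (if k = j \<and> l = i then oadj S x else ozero S)
                   (if k = j \<and> l = j then osmul S (complex_of_real R) (ounit S) else ozero S))"
  using assms by (simp add: mconj_def vsum2 bmat_def al_def)

end



context osys begin

lemma sum_single: assumes "finite A" "q \<in> A" "f \<in> A \<rightarrow> ocarrier S"
  shows "finprod (addmon S) (\<lambda>p. if p = q then f p else ozero S) A = f q"
  using AM.finprod_singleton_swap[of q A f, unfolded addmon_simps] assms by simp

lemma sum_fst_const: assumes "k < n" "c \<in> ocarrier S"
  shows "finprod (addmon S) (\<lambda>p. if fst p = k then c else ozero S) ({..<n} \<times> {..<n}) = osmul S (of_nat n) c"
proof -
  have "finprod (addmon S) (\<lambda>p. c) ({k} \<times> {..<n}) = finprod (addmon S) (\<lambda>p. if fst p = k then c else ozero S) ({..<n} \<times> {..<n})"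
    by (rule AM.finprod_mono_neutral_cong_left) (use assms in auto)
  moreover have "finprod (addmon S) (\<lambda>p. c) ({k} \<times> {..<n}) = c [^]\<^bsub>addmon S\<^esub> card ({k} \<times> {..<n})"
    using AM.finprod_const[of c "{k} \<times> {..<n}"] assms by simp
  moreover have "card ({k} \<times> {..<n}) = n" by (simp add: card_cartesian_product)
  ultimately show ?thesis using pow_smul assms by metis
qed

lemma sum_snd_const: assumes "k < n" "c \<in> ocarrier S"
  shows "finprod (addmon S) (\<lambda>p. if snd p = k then c else ozero S) ({..<n} \<times> {..<n}) = osmul S (of_nat n) c"
proof -
  have "finprod (addmon S) (\<lambda>p. c) ({..<n} \<times> {k}) = finprod (addmon S) (\<lambda>p. if snd p = k then c else ozero S) ({..<n} \<times> {..<n})"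
    by (rule AM.finprod_mono_neutral_cong_left) (use assms in auto)
  moreover have "finprod (addmon S) (\<lambda>p. c) ({..<n} \<times> {k}) = c [^]\<^bsub>addmon S\<^esub> card ({..<n} \<times> {k})"
    using AM.finprod_const[of c "{..<n} \<times> {k}"] assms by simp
  moreover have "card ({..<n} \<times> {k}) = n" by (simp add: card_cartesian_product)
  ultimately show ?thesis using pow_smul assms by metis
qed

lemma half_double: assumes "a \<in> ocarrier S" "b \<in> ocarrier S"
  shows "osmul S (1/2) (oadd S (oadd S a b) (oadd S b a)) = oadd S a b"
proof -
  have "oadd S b a = oadd S a b" using assms add_comm by blast
  moreover have "oadd S (oadd S a b) (oadd S a b) = osmul S 2 (oadd S a b)"
    using smul_add_left[of "oadd S a b" 1 1] assms by simp
  ultimately show ?thesis using assms by simp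
qed

lemma unif_bound:
  assumes n: "n > 0" and X: "X \<in> mats S n" and sa: "madj S n X = X"
    and bd: "\<And>i j. i < n \<Longrightarrow> j < n \<Longrightarrow> bmat S R (X i j) \<in> opos S 2"
  shows "madd S n (meye S n (real n * R)) X \<in> opos S n"
proof -
  define A where "A = {..<n} \<times> {..<n}"
  have finA: "finite A" by (simp add: A_def)
  define Q where "Q = (\<lambda>p. mconj S (al (fst p) (snd p)) 2 n (bmat S R (X (fst p) (snd p))))"
  have Qpos: "\<forall>p\<in>A. Q p \<in> opos S n"
    using bd pos_conj[OF _ n] by (auto simp: Q_def A_def)
  have Spos: "msumset S n Q A \<in> opos S n" by (rule msumset_pos[OF finA n Qpos])
  have Xc: "\<And>i j. i < n \<Longrightarrow> j < n \<Longrightarrow> X i j \<in> ocarrier S" using X mats_in by blast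
  have Xadj: "\<And>i j. i < n \<Longrightarrow> j < n \<Longrightarrow> oadj S (X j i) = X i j"
  proof -
    fix i j assume "i < n" "j < n"
    have "madj S n X i j = X i j" using sa by simp
    thus "oadj S (X j i) = X i j" using \<open>i < n\<close> \<open>j < n\<close> by (simp add: madj_def)
  qed
  define e where "e = osmul S (complex_of_real R) (ounit S)"
  have ec: "e \<in> ocarrier S" by (simp add: e_def)
  define s where "s = (\<lambda>k l::nat. if k = l then osmul S (of_nat n) e else ozero S)"
  have sc: "\<And>k l. s k l \<in> ocarrier S" using ec by (simp add: s_def)
  have entry: "msumset S n Q A k l = oadd S (oadd S (s k l) (X k l)) (oadd S (X k l) (s k l))"
    if kl: "k < n" "l < n" for k l
  proof -
    define t1 where "t1 = (\<lambda>p::nat\<times>nat. if k = fst p \<and> l = fst p then e else ozero S)"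
    define t2 where "t2 = (\<lambda>p::nat\<times>nat. if p = (k, l) then X (fst p) (snd p) else ozero S)"
    define t3 where "t3 = (\<lambda>p::nat\<times>nat. if p = (l, k) then oadj S (X (fst p) (snd p)) else ozero S)"
    define t4 where "t4 = (\<lambda>p::nat\<times>nat. if k = snd p \<and> l = snd p then e else ozero S)"
    have c1: "t1 \<in> A \<rightarrow> ocarrier S" using ec by (auto simp: t1_def)
    have c2: "t2 \<in> A \<rightarrow> ocarrier S" using Xc by (auto simp: t2_def A_def)
    have c3: "t3 \<in> A \<rightarrow> ocarrier S" using Xc by (auto simp: t3_def A_def)
    have c4: "t4 \<in> A \<rightarrow> ocarrier S" using ec by (auto simp: t4_def)
    have Qe: "\<And>p. p \<in> A \<Longrightarrow> Q p k l = oadd S (oadd S (t1 p) (t2 p)) (oadd S (t3 p) (t4 p))"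
    proof -
      fix p assume "p \<in> A"
      then obtain i j where p: "p = (i, j)" "i < n" "j < n" by (auto simp: A_def)
      show "Q p k l = oadd S (oadd S (t1 p) (t2 p)) (oadd S (t3 p) (t4 p))"
        using mconj_al[OF Xc[OF p(2,3)] kl, of i j R] p
        by (auto simp: Q_def t1_def t2_def t3_def t4_def e_def)
    qed
    have "msumset S n Q A k l = finprod (addmon S) (\<lambda>p. oadd S (oadd S (t1 p) (t2 p)) (oadd S (t3 p) (t4 p))) A"
    proof -
      have "finprod (addmon S) (\<lambda>p. Q p k l) A = finprod (addmon S) (\<lambda>p. oadd S (oadd S (t1 p) (t2 p)) (oadd S (t3 p) (t4 p))) A"
        by (rule AM.finprod_cong') (use Qe c1 c2 c3 c4 in \<open>auto simp: Pi_def\<close>)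
      thus ?thesis using kl by (simp add: msumset_def)
    qed
    also have "... = oadd S (finprod (addmon S) (\<lambda>p. oadd S (t1 p) (t2 p)) A) (finprod (addmon S) (\<lambda>p. oadd S (t3 p) (t4 p)) A)"
      using AM.finprod_multf[of "\<lambda>p. oadd S (t1 p) (t2 p)" A "\<lambda>p. oadd S (t3 p) (t4 p)"] c1 c2 c3 c4
      by (auto simp: Pi_def)
    also have "... = oadd S (oadd S (finprod (addmon S) t1 A) (finprod (addmon S) t2 A)) (oadd S (finprod (addmon S) t3 A) (finprod (addmon S) t4 A))"
      using AM.finprod_multf[of t1 A t2] AM.finprod_multf[of t3 A t4] c1 c2 c3 c4 by simp
    also have "finprod (addmon S) t1 A = s k l"
    proof (cases "k = l")
      case True
      hence "t1 = (\<lambda>p. if fst p = k then e else ozero S)" by (auto simp: t1_def)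
      thus ?thesis using sum_fst_const[OF kl(1) ec] True by (simp add: A_def s_def)
    next
      case False
      hence "finprod (addmon S) t1 A = \<one>\<^bsub>addmon S\<^esub>" by (intro AM.finprod_one_eqI) (auto simp: t1_def)
      thus ?thesis using False by (simp add: s_def)
    qed
    also have "finprod (addmon S) t4 A = s k l"
    proof (cases "k = l")
      case True
      hence "t4 = (\<lambda>p. if snd p = k then e else ozero S)" by (auto simp: t4_def)
      thus ?thesis using sum_snd_const[OF kl(1) ec] True by (simp add: A_def s_def)
    next
      case False
      hence "finprod (addmon S) t4 A = \<one>\<^bsub>addmon S\<^esub>" by (intro AM.finprod_one_eqI) (auto simp: t4_def)
      thus ?thesis using False by (simp add: s_def)
    qed
    also have "finprod (addmon S) t2 A = X k l"
      using sum_single[OF finA, of "(k, l)" "\<lambda>p. X (fst p) (snd p)"] kl Xc by (auto simp: t2_def A_def Pi_def)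
    also have "finprod (addmon S) t3 A = X k l"
      using sum_single[OF finA, of "(l, k)" "\<lambda>p. oadj S (X (fst p) (snd p))"] kl Xc Xadj by (auto simp: t3_def A_def Pi_def)
    finally show ?thesis .
  qed
  have "msmul S n (complex_of_real (1/2)) (msumset S n Q A) = madd S n (meye S n (real n * R)) X"
  proof (intro ext)
    fix k l
    show "msmul S n (complex_of_real (1/2)) (msumset S n Q A) k l = madd S n (meye S n (real n * R)) X k l"
    proof (cases "k < n \<and> l < n")
      case True
      have "osmul S (1/2) (oadd S (oadd S (s k l) (X k l)) (oadd S (X k l) (s k l))) = oadd S (s k l) (X k l)"
        using half_double[OF sc Xc] True by blast
      moreover have "s k l = (if k = l then osmul S (complex_of_real (real n * R)) (ounit S) else ozero S)"
        by (simp add: s_def e_def)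
      ultimately show ?thesis using True entry by (simp add: msmul_def madd_def meye_def)
    qed (auto simp: msmul_def madd_def)
  qed
  thus ?thesis using pos_smul[OF n Spos, of "1/2"] by simp
qed

end



context osys begin

lemma bmat_exists: assumes "x \<in> ocarrier S" shows "\<exists>R. bmat S R x \<in> opos S 2"
proof -
  define Y where "Y = (\<lambda>(i::nat) (j::nat). if i = 0 \<and> j = 1 then x else if i = 1 \<and> j = 0 then oadj S x else ozero S)"
  have "Y \<in> mats S 2" using assms by (simp add: Y_def mats_def)
  moreover have "madj S 2 Y = Y" using assms by (intro ext) (auto simp: Y_def madj_def)
  ultimately obtain r where r: "madd S 2 (meye S 2 r) Y \<in> opos S 2" using arch[of 2 Y] by auto
  have "bmat S r x = madd S 2 (meye S 2 r) Y" unfolding Y_def by (rule bmat_as_meye[OF assms])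
  thus ?thesis using r by metis
qed

lemma bmat_add: assumes "x \<in> ocarrier S" "y \<in> ocarrier S" "bmat S R1 x \<in> opos S 2" "bmat S R2 y \<in> opos S 2"
  shows "bmat S (R1 + R2) (oadd S x y) \<in> opos S 2"
proof -
  have "madd S 2 (bmat S R1 x) (bmat S R2 y) = bmat S (R1 + R2) (oadd S x y)"
    using assms(1,2) by (intro ext) (auto simp: madd_def bmat_def smul_add_left adj_add)
  thus ?thesis using pos_add[of 2, OF _ assms(3,4)] by simp
qed

lemma bmat_adj: assumes "x \<in> ocarrier S" "bmat S R x \<in> opos S 2"
  shows "bmat S R (oadj S x) \<in> opos S 2"
proof -
  define \<alpha> where "\<alpha> = (\<lambda>(a::nat) (k::nat). if (a = 0 \<and> k = 1) \<or> (a = 1 \<and> k = 0) then 1 else (0::complex))"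
  have "mconj S \<alpha> 2 2 (bmat S R x) = bmat S R (oadj S x)"
    using assms(1) by (intro ext) (auto simp: mconj_def vsum2 bmat_def \<alpha>_def)
  moreover have "mconj S \<alpha> 2 2 (bmat S R x) \<in> opos S 2" by (rule pos_conj) (simp_all add: assms(2))
  ultimately show ?thesis by simp
qed

lemma bmat_smul: assumes "x \<in> ocarrier S" "bmat S R x \<in> opos S 2"
  shows "bmat S (cmod c * R) (osmul S c x) \<in> opos S 2"
proof -
  define p where "p = complex_of_real (sqrt (cmod c))"
  define q where "q = c / p"
  have pp: "cnj p * p = complex_of_real (cmod c)"
    by (simp add: p_def flip: of_real_mult)
  have qq: "cnj q * q = complex_of_real (cmod c)"
  proof (cases "c = 0")
    case True thus ?thesis by (simp add: q_def)
  next
    case False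
    have "cnj q * q = (cnj c * c) / (cnj p * p)" by (simp add: q_def p_def)
    also have "cnj c * c = complex_of_real (cmod c ^ 2)" using complex_norm_square[of c] by (simp add: mult.commute)
    finally show ?thesis using pp False by (simp add: power2_eq_square flip: of_real_mult of_real_divide)
  qed
  have pq: "cnj p * q = c"
  proof (cases "c = 0")
    case True thus ?thesis by (simp add: q_def)
  next
    case False
    hence "p \<noteq> 0" by (simp add: p_def)
    thus ?thesis by (simp add: q_def p_def)
  qed
  have qp: "cnj q * p = cnj c" using pq by (metis complex_cnj_cnj complex_cnj_mult mult.commute)
  define \<alpha> where "\<alpha> = (\<lambda>(a::nat) (k::nat). if a = 0 \<and> k = 0 then p else if a = 1 \<and> k = 1 then q else (0::complex))"
  have "mconj S \<alpha> 2 2 (bmat S R x) = bmat S (cmod c * R) (osmul S c x)"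
    using assms(1) pp qq pq qp by (intro ext) (auto simp: mconj_def vsum2 bmat_def \<alpha>_def adj_smul mult.commute)
  moreover have "mconj S \<alpha> 2 2 (bmat S R x) \<in> opos S 2" by (rule pos_conj) (simp_all add: assms(2))
  ultimately show ?thesis by simp
qed

end

lemma ucp_bmat: assumes "osys S" "osys T" "ucp S T \<phi>" "x \<in> ocarrier S" "bmat S R x \<in> opos S 2"
  shows "bmat T R (\<phi> x) \<in> opos T 2"
proof -
  have u: "\<forall>x\<in>ocarrier S. \<phi> x \<in> ocarrier T" "\<forall>c. \<forall>x\<in>ocarrier S. \<phi> (osmul S c x) = osmul T c (\<phi> x)"
     "\<phi> (ounit S) = ounit T" "\<forall>n>0. \<forall>X\<in>opos S n. mmap T n \<phi> X \<in> opos T n"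
    using assms(3) by (simp_all add: ucp_def)
  define M where "M = mmap T 2 \<phi> (bmat S R x)"
  have Mp: "M \<in> opos T 2" using u(4) assms(5) by (simp add: M_def)
  have "madj T 2 M 1 0 = M 1 0" using osys.pos_sa[OF assms(2) _ Mp] by simp
  hence adj: "oadj T (\<phi> x) = \<phi> (oadj S x)" by (simp add: M_def madj_def mmap_def bmat_def)
  have "M = bmat T R (\<phi> x)"
    using u(2,3) adj osys.unit_c[OF assms(1)] by (intro ext) (auto simp: M_def mmap_def bmat_def)
  thus ?thesis using Mp by simp
qed




context osys begin

lemma Wc_iff: "f \<in> ocarrier (linf G H S) \<longleftrightarrow>
   (\<forall>x\<in>lcosets\<^bsub>G\<^esub> H. f x \<in> ocarrier S) \<and> (\<forall>x. x \<notin> lcosets\<^bsub>G\<^esub> H \<longrightarrow> f x = ozero S)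
   \<and> (\<exists>r::real. \<forall>x\<in>lcosets\<^bsub>G\<^esub> H. bmat S r (f x) \<in> opos S 2)"
  by (simp add: linf_def)

lemma W_ops[simp]: "oadd (linf G H S) = (\<lambda>f g x. oadd S (f x) (g x))"
  "osmul (linf G H S) = (\<lambda>c f x. osmul S c (f x))"
  "ozero (linf G H S) = (\<lambda>x. ozero S)"
  "oadj (linf G H S) = (\<lambda>f x. oadj S (f x))"
  "ounit (linf G H S) = (\<lambda>x. if x \<in> lcosets\<^bsub>G\<^esub> H then ounit S else ozero S)"
  by (simp_all add: linf_def)

lemma W_pos: "opos (linf G H S) n = {F. F \<in> mats (linf G H S) n \<and> (\<forall>x\<in>lcosets\<^bsub>G\<^esub> H. (\<lambda>i j. F i j x) \<in> opos S n)}"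
  unfolding mats_def by (simp add: linf_def)

lemma Wc_val: "f \<in> ocarrier (linf G H S) \<Longrightarrow> f x \<in> ocarrier S"
  by (cases "x \<in> lcosets\<^bsub>G\<^esub> H") (auto simp: Wc_iff)

lemma Wc_zero: "(\<lambda>x. ozero S) \<in> ocarrier (linf G H S)"
  using bmat_exists[of "ozero S"] by (auto simp: Wc_iff)

lemma Wc_unit: "(\<lambda>x. if x \<in> lcosets\<^bsub>G\<^esub> H then ounit S else ozero S) \<in> ocarrier (linf G H S)"
  using bmat_exists[of "ounit S"] by (auto simp: Wc_iff)

lemma Wc_add: assumes "f \<in> ocarrier (linf G H S)" "g \<in> ocarrier (linf G H S)"
  shows "(\<lambda>x. oadd S (f x) (g x)) \<in> ocarrier (linf G H S)"
proof -
  obtain r1 where r1: "\<forall>x\<in>lcosets\<^bsub>G\<^esub> H. bmat S r1 (f x) \<in> opos S 2" using assms(1) by (auto simp: Wc_iff)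
  obtain r2 where r2: "\<forall>x\<in>lcosets\<^bsub>G\<^esub> H. bmat S r2 (g x) \<in> opos S 2" using assms(2) by (auto simp: Wc_iff)
  have "\<forall>x\<in>lcosets\<^bsub>G\<^esub> H. bmat S (r1 + r2) (oadd S (f x) (g x)) \<in> opos S 2"
    using r1 r2 bmat_add Wc_val assms by blast
  thus ?thesis using assms by (auto simp: Wc_iff)
qed

lemma Wc_smul: assumes "f \<in> ocarrier (linf G H S)"
  shows "(\<lambda>x. osmul S c (f x)) \<in> ocarrier (linf G H S)"
proof -
  obtain r1 where r1: "\<forall>x\<in>lcosets\<^bsub>G\<^esub> H. bmat S r1 (f x) \<in> opos S 2" using assms(1) by (auto simp: Wc_iff)
  have "\<forall>x\<in>lcosets\<^bsub>G\<^esub> H. bmat S (cmod c * r1) (osmul S c (f x)) \<in> opos S 2"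
    using r1 bmat_smul Wc_val assms by blast
  thus ?thesis using assms by (auto simp: Wc_iff)
qed

lemma Wc_adj: assumes "f \<in> ocarrier (linf G H S)"
  shows "(\<lambda>x. oadj S (f x)) \<in> ocarrier (linf G H S)"
proof -
  obtain r1 where r1: "\<forall>x\<in>lcosets\<^bsub>G\<^esub> H. bmat S r1 (f x) \<in> opos S 2" using assms(1) by (auto simp: Wc_iff)
  have "\<forall>x\<in>lcosets\<^bsub>G\<^esub> H. bmat S r1 (oadj S (f x)) \<in> opos S 2"
    using r1 bmat_adj Wc_val assms by blast
  thus ?thesis using assms by (auto simp: Wc_iff)
qed

lemma vsum_W: "vsum (linf G H S) f m x = vsum S (\<lambda>i. f i x) m"
  by (induction m) auto

lemma vsum_Wc: "(\<And>i. i < m \<Longrightarrow> f i \<in> ocarrier (linf G H S)) \<Longrightarrow> vsum (linf G H S) f m \<in> ocarrier (linf G H S)"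
proof (induction m)
  case 0 thus ?case using Wc_zero by simp
next
  case (Suc m)
  hence A: "vsum (linf G H S) f m \<in> ocarrier (linf G H S)" "f m \<in> ocarrier (linf G H S)" by auto
  show ?case using Wc_add[OF A] by simp
qed

lemma W_mats_ev: "F \<in> mats (linf G H S) n \<Longrightarrow> (\<lambda>i j. F i j x) \<in> mats S n"
proof -
  assume F: "F \<in> mats (linf G H S) n"
  show ?thesis unfolding mats_def
  proof (intro CollectI allI conjI impI)
    fix i j assume "i < n \<and> j < n"
    hence "F i j \<in> ocarrier (linf G H S)" using F by (auto simp: mats_def)
    thus "F i j x \<in> ocarrier S" by (rule Wc_val)
  next
    fix i j assume "\<not> (i < n \<and> j < n)" thus "F i j x = ozero S" using F by (auto simp: mats_def)
  qed
qed


lemma ev_madd: "(\<lambda>i j. madd (linf G H S) n F K i j x) = madd S n (\<lambda>i j. F i j x) (\<lambda>i j. K i j x)"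
  by (intro ext) (simp add: madd_def)
lemma ev_msmul: "(\<lambda>i j. msmul (linf G H S) n c F i j x) = msmul S n c (\<lambda>i j. F i j x)"
  by (intro ext) (simp add: msmul_def)
lemma ev_madj: "(\<lambda>i j. madj (linf G H S) n F i j x) = madj S n (\<lambda>i j. F i j x)"
  by (intro ext) (simp add: madj_def)
lemma ev_mconj: "(\<lambda>i j. mconj (linf G H S) \<alpha> n m F i j x) = mconj S \<alpha> n m (\<lambda>i j. F i j x)"
  by (intro ext) (simp add: mconj_def vsum_W)
lemma ev_meye: "x \<in> lcosets\<^bsub>G\<^esub> H \<Longrightarrow> (\<lambda>i j. meye (linf G H S) n r i j x) = meye S n r"
  by (intro ext) (simp add: meye_def)

lemma W_mats_in: "F \<in> mats (linf G H S) n \<Longrightarrow> i < n \<Longrightarrow> j < n \<Longrightarrow> F i j \<in> ocarrier (linf G H S)"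
  by (simp add: mats_def)
lemma W_mats_out: "F \<in> mats (linf G H S) n \<Longrightarrow> \<not> (i < n \<and> j < n) \<Longrightarrow> F i j = (\<lambda>x. ozero S)"
  by (simp add: mats_def)

lemma W_madd_mats: "F \<in> mats (linf G H S) n \<Longrightarrow> K \<in> mats (linf G H S) n \<Longrightarrow> madd (linf G H S) n F K \<in> mats (linf G H S) n"
  unfolding mats_def madd_def by (auto intro: Wc_add)

lemma W_msmul_mats: "F \<in> mats (linf G H S) n \<Longrightarrow> msmul (linf G H S) n c F \<in> mats (linf G H S) n"
  unfolding mats_def msmul_def by (auto intro: Wc_smul)

lemma W_meye_mats: "meye (linf G H S) n r \<in> mats (linf G H S) n"
  unfolding mats_def meye_def using Wc_smul[OF Wc_unit[of G H]] Wc_zero[of G H] by simp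

lemma W_mconj_mats: assumes "F \<in> mats (linf G H S) n" shows "mconj (linf G H S) \<alpha> n m F \<in> mats (linf G H S) m"
proof -
  have "\<And>k l. vsum (linf G H S) (\<lambda>i. vsum (linf G H S) (\<lambda>j. osmul (linf G H S) (cnj (\<alpha> i k) * \<alpha> j l) (F i j)) n) n \<in> ocarrier (linf G H S)"
  proof -
    fix k l
    show "vsum (linf G H S) (\<lambda>i. vsum (linf G H S) (\<lambda>j. osmul (linf G H S) (cnj (\<alpha> i k) * \<alpha> j l) (F i j)) n) n \<in> ocarrier (linf G H S)"
    proof (rule vsum_Wc)
      fix i assume i: "i < n"
      show "vsum (linf G H S) (\<lambda>j. osmul (linf G H S) (cnj (\<alpha> i k) * \<alpha> j l) (F i j)) n \<in> ocarrier (linf G H S)"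
      proof (rule vsum_Wc)
        fix j assume j: "j < n"
        show "osmul (linf G H S) (cnj (\<alpha> i k) * \<alpha> j l) (F i j) \<in> ocarrier (linf G H S)"
          using Wc_smul[OF W_mats_in[OF assms i j]] by simp
      qed
    qed
  qed
  thus ?thesis unfolding mats_def mconj_def using Wc_zero by simp
qed

lemma W_os: "operator_system (linf G H S)"
  unfolding operator_system_def
proof (intro conjI)
  show "ozero (linf G H S) \<in> ocarrier (linf G H S)" using Wc_zero by simp
  show "ounit (linf G H S) \<in> ocarrier (linf G H S)" using Wc_unit by simp
  show "\<forall>x\<in>ocarrier (linf G H S). \<forall>y\<in>ocarrier (linf G H S). oadd (linf G H S) x y \<in> ocarrier (linf G H S)"
    by (auto intro: Wc_add)
  show "\<forall>c. \<forall>x\<in>ocarrier (linf G H S). osmul (linf G H S) c x \<in> ocarrier (linf G H S)"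
    by (auto intro: Wc_smul)
  show "\<forall>x\<in>ocarrier (linf G H S). oadj (linf G H S) x \<in> ocarrier (linf G H S)"
    by (auto intro: Wc_adj)
  show "\<forall>x\<in>ocarrier (linf G H S). \<forall>y\<in>ocarrier (linf G H S). \<forall>z\<in>ocarrier (linf G H S).
     oadd (linf G H S) (oadd (linf G H S) x y) z = oadd (linf G H S) x (oadd (linf G H S) y z)"
    by (auto intro!: ext simp: add_assoc Wc_val)
  show "\<forall>x\<in>ocarrier (linf G H S). \<forall>y\<in>ocarrier (linf G H S). oadd (linf G H S) x y = oadd (linf G H S) y x"
    by (auto intro!: ext simp: Wc_val intro: add_comm)
  show "\<forall>x\<in>ocarrier (linf G H S). oadd (linf G H S) (ozero (linf G H S)) x = x"
    by (auto intro!: ext simp: Wc_val)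
  show "\<forall>x\<in>ocarrier (linf G H S). oadd (linf G H S) x (osmul (linf G H S) (-1) x) = ozero (linf G H S)"
    by (auto intro!: ext simp: Wc_val add_neg)
  show "\<forall>x\<in>ocarrier (linf G H S). osmul (linf G H S) 1 x = x"
    by (auto intro!: ext simp: Wc_val)
  show "\<forall>a b. \<forall>x\<in>ocarrier (linf G H S). osmul (linf G H S) a (osmul (linf G H S) b x) = osmul (linf G H S) (a * b) x"
    by (auto intro!: ext simp: Wc_val)
  show "\<forall>a b. \<forall>x\<in>ocarrier (linf G H S). osmul (linf G H S) (a + b) x = oadd (linf G H S) (osmul (linf G H S) a x) (osmul (linf G H S) b x)"
    by (auto intro!: ext simp: Wc_val smul_add_left)
  show "\<forall>a. \<forall>x\<in>ocarrier (linf G H S). \<forall>y\<in>ocarrier (linf G H S). osmul (linf G H S) a (oadd (linf G H S) x y) = oadd (linf G H S) (osmul (linf G H S) a x) (osmul (linf G H S) a y)"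
    by (auto intro!: ext simp: Wc_val smul_add_right)
  show "\<forall>x\<in>ocarrier (linf G H S). oadj (linf G H S) (oadj (linf G H S) x) = x"
    by (auto intro!: ext simp: Wc_val)
  show "\<forall>x\<in>ocarrier (linf G H S). \<forall>y\<in>ocarrier (linf G H S). oadj (linf G H S) (oadd (linf G H S) x y) = oadd (linf G H S) (oadj (linf G H S) x) (oadj (linf G H S) y)"
    by (auto intro!: ext simp: Wc_val adj_add)
  show "\<forall>c. \<forall>x\<in>ocarrier (linf G H S). oadj (linf G H S) (osmul (linf G H S) c x) = osmul (linf G H S) (cnj c) (oadj (linf G H S) x)"
    by (auto intro!: ext simp: Wc_val adj_smul)
  show "oadj (linf G H S) (ounit (linf G H S)) = ounit (linf G H S)"
    by (auto intro!: ext)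
  show "\<forall>n>0. opos (linf G H S) n \<subseteq> mats (linf G H S) n"
    by (auto simp: W_pos)
  show "\<forall>n>0. \<forall>X\<in>opos (linf G H S) n. madj (linf G H S) n X = X"
  proof (intro allI impI ballI)
    fix n :: nat and X assume n: "n > 0" and X: "X \<in> opos (linf G H S) n"
    have Xm: "X \<in> mats (linf G H S) n" using X by (simp add: W_pos)
    show "madj (linf G H S) n X = X"
    proof (intro ext)
      fix i j x
      show "madj (linf G H S) n X i j x = X i j x"
      proof (cases "i < n \<and> j < n")
        case ij: True
        show ?thesis
        proof (cases "x \<in> lcosets\<^bsub>G\<^esub> H")
          case True
          hence "madj S n (\<lambda>i j. X i j x) = (\<lambda>i j. X i j x)" using X n pos_sa by (simp add: W_pos)
          hence "madj S n (\<lambda>i j. X i j x) i j = X i j x" by simp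
          thus ?thesis using ij by (simp add: madj_def)
        next
          case False
          thus ?thesis using ij W_mats_in[OF Xm] by (simp add: madj_def Wc_iff)
        qed
      qed (auto simp: madj_def W_mats_out[OF Xm])
    qed
  qed
  show "\<forall>n>0. \<forall>X\<in>opos (linf G H S) n. \<forall>Y\<in>opos (linf G H S) n. madd (linf G H S) n X Y \<in> opos (linf G H S) n"
  proof (intro allI impI ballI)
    fix n :: nat and X Y assume n: "n > 0" and X: "X \<in> opos (linf G H S) n" and Y: "Y \<in> opos (linf G H S) n"
    show "madd (linf G H S) n X Y \<in> opos (linf G H S) n"
      using X Y by (auto simp: W_pos ev_madd intro!: W_madd_mats pos_add[OF n])
  qed
  show "\<forall>n>0. \<forall>X\<in>opos (linf G H S) n. \<forall>r\<ge>0. msmul (linf G H S) n (complex_of_real r) X \<in> opos (linf G H S) n"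
  proof (intro allI impI ballI)
    fix n :: nat and X and r :: real assume n: "n > 0" and X: "X \<in> opos (linf G H S) n" and r: "r \<ge> 0"
    show "msmul (linf G H S) n (complex_of_real r) X \<in> opos (linf G H S) n"
      using X r by (auto simp: W_pos ev_msmul intro!: W_msmul_mats pos_smul[OF n])
  qed
  show "\<forall>n>0. \<forall>X\<in>opos (linf G H S) n. msmul (linf G H S) n (- 1) X \<in> opos (linf G H S) n \<longrightarrow> X = mzero (linf G H S)"
  proof (intro allI impI ballI)
    fix n :: nat and X assume n: "n > 0" and X: "X \<in> opos (linf G H S) n" and Xn: "msmul (linf G H S) n (- 1) X \<in> opos (linf G H S) n"
    have Xm: "X \<in> mats (linf G H S) n" using X by (simp add: W_pos)
    show "X = mzero (linf G H S)"
    proof (intro ext)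
      fix i j x
      show "X i j x = mzero (linf G H S) i j x"
      proof (cases "i < n \<and> j < n")
        case True
        show ?thesis
        proof (cases "x \<in> lcosets\<^bsub>G\<^esub> H")
          case True
          have "(\<lambda>i j. X i j x) = mzero S"
            using pos_anti[OF n] X Xn True by (simp add: W_pos ev_msmul)
          hence "X i j x = ozero S" by (simp add: mzero_def fun_eq_iff)
          thus ?thesis by (simp add: mzero_def)
        next
          case False
          thus ?thesis using True W_mats_in[OF Xm] by (simp add: mzero_def Wc_iff)
        qed
      qed (auto simp: mzero_def W_mats_out[OF Xm])
    qed
  qed
  show "\<forall>n>0. \<forall>m>0. \<forall>X\<in>opos (linf G H S) n. \<forall>\<alpha>. mconj (linf G H S) \<alpha> n m X \<in> opos (linf G H S) m"
  proof (intro allI impI ballI)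
    fix n m :: nat and X \<alpha> assume n: "n > 0" and m: "m > 0" and X: "X \<in> opos (linf G H S) n"
    show "mconj (linf G H S) \<alpha> n m X \<in> opos (linf G H S) m"
      using X by (auto simp: W_pos ev_mconj intro!: W_mconj_mats pos_conj[OF n m])
  qed
  show "\<forall>n>0. \<forall>X\<in>mats (linf G H S) n. madj (linf G H S) n X = X \<longrightarrow> (\<exists>r>0. madd (linf G H S) n (meye (linf G H S) n r) X \<in> opos (linf G H S) n)"
  proof (intro allI impI ballI)
    fix n :: nat and X assume n: "n > 0" and Xm: "X \<in> mats (linf G H S) n" and sa: "madj (linf G H S) n X = X"
    have "\<forall>i j. \<exists>r::real. i < n \<and> j < n \<longrightarrow> (\<forall>x\<in>lcosets\<^bsub>G\<^esub> H. bmat S r (X i j x) \<in> opos S 2)"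
      using W_mats_in[OF Xm] by (auto simp: Wc_iff)
    then obtain rr where rr: "\<And>i j x. i < n \<Longrightarrow> j < n \<Longrightarrow> x \<in> lcosets\<^bsub>G\<^esub> H \<Longrightarrow> bmat S (rr i j) (X i j x) \<in> opos S 2"
      by metis
    define R where "R = (\<Sum>i<n. \<Sum>j<n. \<bar>rr i j\<bar>)"
    have rrR: "rr i j \<le> R" if "i < n" "j < n" for i j
    proof -
      have "rr i j \<le> \<bar>rr i j\<bar>" by simp
      also have "\<dots> \<le> (\<Sum>j<n. \<bar>rr i j\<bar>)" by (rule member_le_sum) (use that in auto)
      also have "\<dots> \<le> R" unfolding R_def by (rule member_le_sum[of i "{..<n}" "\<lambda>i. \<Sum>j<n. \<bar>rr i j\<bar>"]) (use that in \<open>auto intro: sum_nonneg\<close>)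
      finally show ?thesis .
    qed
    define r0 where "r0 = max (real n * R) 0 + 1"
    have r0: "r0 > 0" "real n * R \<le> r0" by (auto simp: r0_def)
    have "madd (linf G H S) n (meye (linf G H S) n r0) X \<in> opos (linf G H S) n"
    proof -
      have "madd S n (meye S n r0) (\<lambda>i j. X i j x) \<in> opos S n" if x: "x \<in> lcosets\<^bsub>G\<^esub> H" for x
      proof (rule meye_mono[OF n W_mats_ev[OF Xm] _ r0(2)])
        show "madd S n (meye S n (real n * R)) (\<lambda>i j. X i j x) \<in> opos S n"
        proof (rule unif_bound[OF n W_mats_ev[OF Xm]])
          show "madj S n (\<lambda>i j. X i j x) = (\<lambda>i j. X i j x)" using ev_madj[of G H n X x] sa by simp
          fix i j assume ij: "i < n" "j < n"
          show "bmat S R (X i j x) \<in> opos S 2"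
            by (rule bmat_mono[OF _ rr[OF ij x] rrR[OF ij]]) (rule Wc_val[OF W_mats_in[OF Xm ij]])
        qed
      qed
      moreover have "madd (linf G H S) n (meye (linf G H S) n r0) X \<in> mats (linf G H S) n"
        by (rule W_madd_mats[OF W_meye_mats Xm])
      ultimately show ?thesis by (simp add: W_pos ev_madd ev_meye)
    qed
    thus "\<exists>r>0. madd (linf G H S) n (meye (linf G H S) n r) X \<in> opos (linf G H S) n" using r0 by blast
  qed
  show "\<forall>n>0. \<forall>X\<in>mats (linf G H S) n. madj (linf G H S) n X = X \<longrightarrow> (\<forall>r>0. madd (linf G H S) n (meye (linf G H S) n r) X \<in> opos (linf G H S) n) \<longrightarrow> X \<in> opos (linf G H S) n"
  proof (intro allI impI ballI)
    fix n :: nat and X assume n: "n > 0" and Xm: "X \<in> mats (linf G H S) n" and sa: "madj (linf G H S) n X = X"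
      and A: "\<forall>r>0. madd (linf G H S) n (meye (linf G H S) n r) X \<in> opos (linf G H S) n"
    have "(\<lambda>i j. X i j x) \<in> opos S n" if x: "x \<in> lcosets\<^bsub>G\<^esub> H" for x
    proof (rule closed[OF n W_mats_ev[OF Xm]])
      show "madj S n (\<lambda>i j. X i j x) = (\<lambda>i j. X i j x)" using ev_madj[of G H n X x] sa by simp
      show "\<forall>r>0. madd S n (meye S n r) (\<lambda>i j. X i j x) \<in> opos S n"
        using A x by (simp add: W_pos ev_madd ev_meye)
    qed
    thus "X \<in> opos (linf G H S) n" using Xm by (simp add: W_pos)
  qed
qed

end



locale indctx = group G for G :: "('g, 'm) monoid_scheme" (structure) +
  fixes H :: "'g set" and \<pi> :: "'g set \<Rightarrow> 'g"
  assumes sub: "subgroup H G" and pi_in: "\<forall>x\<in>lcosets\<^bsub>G\<^esub> H. \<pi> x \<in> x" and pi_H: "\<pi> H = \<one>\<^bsub>G\<^esub>"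
begin

lemma H_sub: "H \<subseteq> carrier G" using sub subgroup.subset by blast

lemma L_sub: "x \<in> lcosets H \<Longrightarrow> x \<subseteq> carrier G"
  using subgroup.lcosets_carrier[OF sub is_group] by blast

lemma L_mult: "x \<in> lcosets H \<Longrightarrow> g \<in> carrier G \<Longrightarrow> g <# x \<in> lcosets H"
  unfolding LCOSETS_def using lcos_m_assoc[OF H_sub] by auto

lemma L_one: "x \<in> lcosets H \<Longrightarrow> \<one> <# x = x"
  using lcos_mult_one L_sub by blast

lemma L_assoc: "x \<in> lcosets H \<Longrightarrow> g \<in> carrier G \<Longrightarrow> k \<in> carrier G \<Longrightarrow> (g \<otimes> k) <# x = g <# (k <# x)"
  using lcos_m_assoc L_sub by simp

lemma L_inv_cancel: "x \<in> lcosets H \<Longrightarrow> g \<in> carrier G \<Longrightarrow> inv g <# (g <# x) = x"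
  using L_assoc[of x "inv g" g] L_one by simp

lemma L_cancel_inv: "x \<in> lcosets H \<Longrightarrow> g \<in> carrier G \<Longrightarrow> g <# (inv g <# x) = x"
  using L_assoc[of x g "inv g"] L_one by simp

lemma H_L: "H \<in> lcosets H"
  unfolding LCOSETS_def using lcos_mult_one[OF H_sub] by force

lemma pi_c: "x \<in> lcosets H \<Longrightarrow> \<pi> x \<in> carrier G"
  using pi_in L_sub by blast

lemma pi_coset: "x \<in> lcosets H \<Longrightarrow> \<pi> x <# H = x"
proof -
  assume x: "x \<in> lcosets H"
  then obtain a where a: "a \<in> carrier G" "x = a <# H" by (auto simp: LCOSETS_def)
  have "\<pi> x \<in> a <# H" using pi_in x a by auto
  thus ?thesis using l_repr_independence[OF _ a(1) sub] a by simp
qed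

lemma pi_inv_H: "x \<in> lcosets H \<Longrightarrow> inv (\<pi> x) <# x = H"
  using L_inv_cancel[OF H_L pi_c] pi_coset by metis

lemma H_coset: "h \<in> H \<Longrightarrow> h <# H = H"
proof -
  assume h: "h \<in> H"
  have "h \<in> \<one> <# H" using h lcos_mult_one[OF H_sub] by simp
  thus ?thesis using l_repr_independence[of h \<one> H] sub lcos_mult_one[OF H_sub] by simp
qed

lemma cocycle_c: "x \<in> lcosets H \<Longrightarrow> g \<in> carrier G \<Longrightarrow> cocycle G \<pi> x g \<in> H"
proof -
  assume x: "x \<in> lcosets H" and g: "g \<in> carrier G"
  have gx: "g <# x \<in> lcosets H" by (rule L_mult[OF x g])
  have mem: "\<pi> (g <# x) \<in> g <# x" using pi_in gx by blast
  have eq: "g <# x = (g \<otimes> \<pi> x) <# H" using pi_coset[OF x] L_assoc[OF H_L g pi_c[OF x]] by simp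
  have "\<pi> (g <# x) \<in> (g \<otimes> \<pi> x) <# H" using mem eq by metis
  hence "inv (g \<otimes> \<pi> x) \<otimes> \<pi> (g <# x) \<in> H"
    by (rule subgroup.lcos_module_imp[OF sub is_group m_closed[OF g pi_c[OF x]]])
  hence "inv (inv (g \<otimes> \<pi> x) \<otimes> \<pi> (g <# x)) \<in> H" by (rule subgroup.m_inv_closed[OF sub])
  moreover have "inv (inv (g \<otimes> \<pi> x) \<otimes> \<pi> (g <# x)) = cocycle G \<pi> x g"
    using g pi_c[OF x] pi_c[OF gx] by (simp add: cocycle_def inv_mult_group m_assoc)
  ultimately show ?thesis by simp
qed

lemma cocycle_carrier: "x \<in> lcosets H \<Longrightarrow> g \<in> carrier G \<Longrightarrow> cocycle G \<pi> x g \<in> carrier G"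
  using cocycle_c H_sub by blast

lemma cocycle_mult: assumes y: "y \<in> lcosets H" and g: "g \<in> carrier G" and k: "k \<in> carrier G"
  shows "cocycle G \<pi> (k <# y) g \<otimes> cocycle G \<pi> y k = cocycle G \<pi> y (g \<otimes> k)"
proof -
  have ky: "k <# y \<in> lcosets H" by (rule L_mult[OF y k])
  have gky: "g <# (k <# y) \<in> lcosets H" by (rule L_mult[OF ky g])
  note c = pi_c[OF y] pi_c[OF ky] pi_c[OF gky] g k
  have cancel: "\<And>a z. a \<in> carrier G \<Longrightarrow> z \<in> carrier G \<Longrightarrow> a \<otimes> (inv a \<otimes> z) = z"
    by (simp add: m_assoc[symmetric])
  have "cocycle G \<pi> (k <# y) g \<otimes> cocycle G \<pi> y k
      = inv \<pi> (g <# (k <# y)) \<otimes> g \<otimes> (\<pi> (k <# y) \<otimes> inv \<pi> (k <# y)) \<otimes> k \<otimes> \<pi> y"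
    using c by (simp add: cocycle_def m_assoc cancel)
  also have "\<dots> = inv \<pi> (g <# (k <# y)) \<otimes> (g \<otimes> k) \<otimes> \<pi> y" using c by (simp add: m_assoc)
  also have "\<dots> = cocycle G \<pi> y (g \<otimes> k)" using L_assoc[OF y g k] by (simp add: cocycle_def)
  finally show ?thesis .
qed

lemma cocycle_one: "x \<in> lcosets H \<Longrightarrow> cocycle G \<pi> x \<one> = \<one>"
  using L_one pi_c by (simp add: cocycle_def)

lemma cocycle_H: "h \<in> H \<Longrightarrow> cocycle G \<pi> H h = h"
  using H_coset pi_H H_sub by (auto simp: cocycle_def)

end



locale indctx2 = indctx +
  fixes V :: "'v opsys" and actV :: "'g \<Rightarrow> 'v \<Rightarrow> 'v"
  assumes Hsys: "G_opsys (G\<lparr>carrier := H\<rparr>) V actV"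
begin

lemma V_os: "osys V" using Hsys by (simp add: G_opsys_def osys_def)

sublocale V: osys V by (rule V_os)

lemma act_ucp: "h \<in> H \<Longrightarrow> ucp V V (actV h)" using Hsys by (simp add: G_opsys_def)
lemma act_one: "v \<in> ocarrier V \<Longrightarrow> actV \<one> v = v" using Hsys by (simp add: G_opsys_def)
lemma act_mult: "h \<in> H \<Longrightarrow> k \<in> H \<Longrightarrow> v \<in> ocarrier V \<Longrightarrow> actV (h \<otimes> k) v = actV h (actV k v)"
  using Hsys by (simp add: G_opsys_def)

lemma act_c: "h \<in> H \<Longrightarrow> v \<in> ocarrier V \<Longrightarrow> actV h v \<in> ocarrier V"
  using act_ucp by (simp add: ucp_def)
lemma act_add: "h \<in> H \<Longrightarrow> v \<in> ocarrier V \<Longrightarrow> w \<in> ocarrier V \<Longrightarrow> actV h (oadd V v w) = oadd V (actV h v) (actV h w)"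
  using act_ucp by (simp add: ucp_def)
lemma act_smul: "h \<in> H \<Longrightarrow> v \<in> ocarrier V \<Longrightarrow> actV h (osmul V c v) = osmul V c (actV h v)"
  using act_ucp by (simp add: ucp_def)
lemma act_unit: "h \<in> H \<Longrightarrow> actV h (ounit V) = ounit V"
  using act_ucp by (simp add: ucp_def)
lemma act_pos: "h \<in> H \<Longrightarrow> n > 0 \<Longrightarrow> X \<in> opos V n \<Longrightarrow> mmap V n (actV h) X \<in> opos V n"
  using act_ucp by (simp add: ucp_def)

abbreviation "W \<equiv> linf G H V"
abbreviation "ind \<equiv> ind_act G H \<pi> V actV"

lemma ind_in: "x \<in> lcosets H \<Longrightarrow> ind g f x = actV (cocycle G \<pi> (inv g <# x) g) (f (inv g <# x))"
  by (simp add: ind_act_def)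
lemma ind_out: "x \<notin> lcosets H \<Longrightarrow> ind g f x = ozero V"
  by (simp add: ind_act_def)

lemma ind_c: assumes g: "g \<in> carrier G" and f: "f \<in> ocarrier W" shows "ind g f \<in> ocarrier W"
proof -
  obtain r where r: "\<forall>x\<in>lcosets H. bmat V r (f x) \<in> opos V 2" using f by (auto simp: V.Wc_iff)
  have yL: "\<And>x. x \<in> lcosets H \<Longrightarrow> inv g <# x \<in> lcosets H" using L_mult g by simp
  have cH: "\<And>x. x \<in> lcosets H \<Longrightarrow> cocycle G \<pi> (inv g <# x) g \<in> H" using cocycle_c yL g by simp
  have "\<forall>x\<in>lcosets H. ind g f x \<in> ocarrier V"
    using act_c cH V.Wc_val[OF f] by (simp add: ind_in)
  moreover have "\<forall>x\<in>lcosets H. bmat V r (ind g f x) \<in> opos V 2"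
    using ucp_bmat[OF V_os V_os act_ucp[OF cH] V.Wc_val[OF f]] r yL by (simp add: ind_in)
  ultimately show ?thesis by (auto simp: V.Wc_iff ind_out)
qed

lemma yL: "g \<in> carrier G \<Longrightarrow> x \<in> lcosets H \<Longrightarrow> inv g <# x \<in> lcosets H"
  using L_mult by simp
lemma cH: "g \<in> carrier G \<Longrightarrow> x \<in> lcosets H \<Longrightarrow> cocycle G \<pi> (inv g <# x) g \<in> H"
  using cocycle_c yL by simp

lemma ind_add: assumes g: "g \<in> carrier G" and f1: "f1 \<in> ocarrier W" and f2: "f2 \<in> ocarrier W"
  shows "ind g (oadd W f1 f2) = oadd W (ind g f1) (ind g f2)"
proof (intro ext)
  fix x show "ind g (oadd W f1 f2) x = oadd W (ind g f1) (ind g f2) x"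
    by (cases "x \<in> lcosets H") (simp_all add: ind_in ind_out act_add cH g V.Wc_val[OF f1] V.Wc_val[OF f2])
qed

lemma ind_smul: assumes g: "g \<in> carrier G" and f1: "f1 \<in> ocarrier W"
  shows "ind g (osmul W c f1) = osmul W c (ind g f1)"
proof (intro ext)
  fix x show "ind g (osmul W c f1) x = osmul W c (ind g f1) x"
    by (cases "x \<in> lcosets H") (simp_all add: ind_in ind_out act_smul cH g V.Wc_val[OF f1])
qed

lemma ind_unit: assumes g: "g \<in> carrier G" shows "ind g (ounit W) = ounit W"
proof (intro ext)
  fix x show "ind g (ounit W) x = ounit W x"
    by (cases "x \<in> lcosets H") (simp_all add: ind_in ind_out act_unit cH g yL)
qed

lemma ind_pos: assumes g: "g \<in> carrier G" and n: "n > 0" and F: "F \<in> opos W n"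
  shows "mmap W n (ind g) F \<in> opos W n"
proof -
  have Fm: "F \<in> mats W n" using F by (simp add: V.W_pos)
  have "mmap W n (ind g) F \<in> mats W n"
    unfolding mats_def
  proof (intro CollectI allI conjI impI)
    fix i j assume "i < n \<and> j < n"
    thus "mmap W n (ind g) F i j \<in> ocarrier W" using ind_c[OF g V.W_mats_in[OF Fm]] by (simp add: mmap_def)
  next
    fix i j assume "\<not> (i < n \<and> j < n)"
    thus "mmap W n (ind g) F i j = ozero W" by (auto simp: mmap_def)
  qed
  moreover have "(\<lambda>i j. mmap W n (ind g) F i j x) \<in> opos V n" if x: "x \<in> lcosets H" for x
  proof -
    have "(\<lambda>i j. mmap W n (ind g) F i j x) = mmap V n (actV (cocycle G \<pi> (inv g <# x) g)) (\<lambda>i j. F i j (inv g <# x))"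
      using x by (intro ext) (simp add: mmap_def ind_in)
    moreover have "(\<lambda>i j. F i j (inv g <# x)) \<in> opos V n" using F yL[OF g x] by (simp add: V.W_pos)
    ultimately show ?thesis using act_pos[OF cH[OF g x] n] by simp
  qed
  ultimately show ?thesis by (simp add: V.W_pos)
qed

lemma ind_ucp: assumes g: "g \<in> carrier G" shows "ucp W W (ind g)"
  unfolding ucp_def
proof (intro conjI ballI allI impI)
  fix x assume "x \<in> ocarrier W" thus "ind g x \<in> ocarrier W" by (rule ind_c[OF g])
next
  fix x y assume "x \<in> ocarrier W" "y \<in> ocarrier W"
  thus "ind g (oadd W x y) = oadd W (ind g x) (ind g y)" by (rule ind_add[OF g])
next
  fix c x assume "x \<in> ocarrier W"
  thus "ind g (osmul W c x) = osmul W c (ind g x)" by (rule ind_smul[OF g])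
next
  show "ind g (ounit W) = ounit W" by (rule ind_unit[OF g])
next
  fix n :: nat and X assume "n > 0" "X \<in> opos W n"
  thus "mmap W n (ind g) X \<in> opos W n" by (rule ind_pos[OF g])
qed

lemma ind_one: assumes f: "f \<in> ocarrier W" shows "ind \<one> f = f"
proof (intro ext)
  fix x show "ind \<one> f x = f x"
  proof (cases "x \<in> lcosets H")
    case True
    thus ?thesis using L_one cocycle_one act_one V.Wc_val[OF f] by (simp add: ind_in)
  next
    case False
    thus ?thesis using f by (simp add: ind_out V.Wc_iff)
  qed
qed

lemma ind_mult: assumes g: "g \<in> carrier G" and k: "k \<in> carrier G" and f: "f \<in> ocarrier W"
  shows "ind (g \<otimes> k) f = ind g (ind k f)"
proof (intro ext)
  fix x show "ind (g \<otimes> k) f x = ind g (ind k f) x"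
  proof (cases "x \<in> lcosets H")
    case x: True
    define y where "y = inv (g \<otimes> k) <# x"
    define z where "z = inv g <# x"
    have zL: "z \<in> lcosets H" using yL[OF g x] by (simp add: z_def)
    have yL': "y \<in> lcosets H" using yL[OF m_closed[OF g k] x] by (simp add: y_def)
    have yz: "inv k <# z = y" using L_assoc[OF x inv_closed[OF k] inv_closed[OF g]] g k
      by (simp add: y_def z_def inv_mult_group)
    have zy: "k <# y = z" using L_cancel_inv[OF zL k] yz by simp
    have "ind g (ind k f) x = actV (cocycle G \<pi> z g) (actV (cocycle G \<pi> y k) (f y))"
      using x zL by (simp add: ind_in z_def[symmetric] yz)
    also have "\<dots> = actV (cocycle G \<pi> z g \<otimes> cocycle G \<pi> y k) (f y)"
      using act_mult[OF cocycle_c[OF zL g] cocycle_c[OF yL' k] V.Wc_val[OF f]] by simp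
    also have "cocycle G \<pi> z g \<otimes> cocycle G \<pi> y k = cocycle G \<pi> y (g \<otimes> k)"
      using cocycle_mult[OF yL' g k] zy by simp
    finally show ?thesis using x by (simp add: ind_in y_def)
  next
    case False
    thus ?thesis by (simp add: ind_out)
  qed
qed

lemma ind_Gsys: "G_opsys G W ind"
  unfolding G_opsys_def
proof (intro conjI ballI)
  show "operator_system W" by (rule V.W_os)
  fix g assume "g \<in> carrier G" thus "ucp W W (ind g)" by (rule ind_ucp)
next
  fix x assume "x \<in> ocarrier W" thus "ind \<one> x = x" by (rule ind_one)
next
  fix g h x assume "g \<in> carrier G" "h \<in> carrier G" "x \<in> ocarrier W"
  thus "ind (g \<otimes> h) x = ind g (ind h x)" by (rule ind_mult)
qed

end



lemma G_opsys_restrict: assumes "G_opsys G S act" "H \<subseteq> carrier G" shows "G_opsys (G\<lparr>carrier := H\<rparr>) S act"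
  using assms unfolding G_opsys_def by (simp add: subset_iff)

context indctx2 begin

lemma main_ext:
  fixes W1 W2 :: "'w opsys" and act :: "'g \<Rightarrow> 'w \<Rightarrow> 'w" and \<phi> :: "'w \<Rightarrow> 'g set \<Rightarrow> 'v"
  assumes inj: "G_injective (G\<lparr>carrier := H\<rparr>) V actV TYPE('w)"
    and s1: "G_opsys G W1 act" and s2: "G_opsys G W2 act" and sub12: "subsystem W1 W2"
    and u\<phi>: "ucp W1 W \<phi>" and e\<phi>: "equivariant G W1 act ind \<phi>"
  shows "\<exists>\<psi>. ucp W2 W \<psi> \<and> equivariant G W2 act ind \<psi> \<and> (\<forall>x\<in>ocarrier W1. \<psi> x = \<phi> x)"
proof -
  have os1: "osys W1" and os2: "osys W2" using s1 s2 by (simp_all add: G_opsys_def osys_def)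
  have a1: "\<And>g. g \<in> carrier G \<Longrightarrow> ucp W1 W1 (act g)" using s1 by (simp add: G_opsys_def)
  have a2: "\<And>g. g \<in> carrier G \<Longrightarrow> ucp W2 W2 (act g)" using s2 by (simp add: G_opsys_def)
  have a2m: "\<And>g k w. g \<in> carrier G \<Longrightarrow> k \<in> carrier G \<Longrightarrow> w \<in> ocarrier W2 \<Longrightarrow> act (g \<otimes> k) w = act g (act k w)"
    using s2 by (simp add: G_opsys_def)
  have a1c: "\<And>g w. g \<in> carrier G \<Longrightarrow> w \<in> ocarrier W1 \<Longrightarrow> act g w \<in> ocarrier W1" using a1 by (simp add: ucp_def)
  have a2c: "\<And>g w. g \<in> carrier G \<Longrightarrow> w \<in> ocarrier W2 \<Longrightarrow> act g w \<in> ocarrier W2" using a2 by (simp add: ucp_def)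
  have s1H: "G_opsys (G\<lparr>carrier := H\<rparr>) W1 act" by (rule G_opsys_restrict[OF s1 H_sub])
  have s2H: "G_opsys (G\<lparr>carrier := H\<rparr>) W2 act" by (rule G_opsys_restrict[OF s2 H_sub])
  have C12: "ocarrier W1 \<subseteq> ocarrier W2" using sub12 by (simp add: subsystem_def)
  have \<phi>c: "\<And>w. w \<in> ocarrier W1 \<Longrightarrow> \<phi> w \<in> ocarrier W" using u\<phi> by (simp add: ucp_def)
  define \<phi>0 where "\<phi>0 = (\<lambda>w. \<phi> w H)"
  have u0: "ucp W1 V \<phi>0"
    unfolding ucp_def
  proof (intro conjI ballI allI impI)
    fix x assume "x \<in> ocarrier W1" thus "\<phi>0 x \<in> ocarrier V" unfolding \<phi>0_def by (rule V.Wc_val[OF \<phi>c])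
  next
    fix x y assume "x \<in> ocarrier W1" "y \<in> ocarrier W1"
    thus "\<phi>0 (oadd W1 x y) = oadd V (\<phi>0 x) (\<phi>0 y)" using u\<phi> by (simp add: ucp_def \<phi>0_def)
  next
    fix c x assume "x \<in> ocarrier W1"
    thus "\<phi>0 (osmul W1 c x) = osmul V c (\<phi>0 x)" using u\<phi> by (simp add: ucp_def \<phi>0_def)
  next
    show "\<phi>0 (ounit W1) = ounit V" using u\<phi> H_L by (simp add: ucp_def \<phi>0_def)
  next
    fix n :: nat and X assume n: "n > 0" and X: "X \<in> opos W1 n"
    have "mmap W n \<phi> X \<in> opos W n" using u\<phi> n X by (simp add: ucp_def)
    hence "(\<lambda>i j. mmap W n \<phi> X i j H) \<in> opos V n" using H_L by (simp add: V.W_pos)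
    moreover have "(\<lambda>i j. mmap W n \<phi> X i j H) = mmap V n \<phi>0 X"
      by (intro ext) (simp add: mmap_def \<phi>0_def)
    ultimately show "mmap V n \<phi>0 X \<in> opos V n" by simp
  qed
  have e0: "equivariant (G\<lparr>carrier := H\<rparr>) W1 act actV \<phi>0"
    unfolding equivariant_def
  proof (intro ballI)
    fix h w assume h: "h \<in> carrier (G\<lparr>carrier := H\<rparr>)" and w: "w \<in> ocarrier W1"
    have hH: "h \<in> H" using h by simp
    have hG: "h \<in> carrier G" using hH H_sub by blast
    have ih: "inv h <# H = H" using H_coset subgroup.m_inv_closed[OF sub hH] by simp
    have "\<phi>0 (act h w) = ind h (\<phi> w) H" using e\<phi> hG w by (simp add: equivariant_def \<phi>0_def)
    also have "\<dots> = actV h (\<phi>0 w)" using H_L ih cocycle_H[OF hH] by (simp add: ind_in \<phi>0_def)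
    finally show "\<phi>0 (act h w) = actV h (\<phi>0 w)" .
  qed
  obtain \<psi>0 where u\<psi>0: "ucp W2 V \<psi>0" and e\<psi>0: "equivariant (G\<lparr>carrier := H\<rparr>) W2 act actV \<psi>0"
    and ag0: "\<forall>x\<in>ocarrier W1. \<psi>0 x = \<phi>0 x"
    using inj s1H s2H sub12 u0 e0 unfolding G_injective_def by blast
  define \<psi> where "\<psi> = (\<lambda>w x. if x \<in> lcosets H then \<psi>0 (act (inv (\<pi> x)) w) else ozero V)"
  have p0c: "\<And>w. w \<in> ocarrier W2 \<Longrightarrow> \<psi>0 w \<in> ocarrier V" using u\<psi>0 by (simp add: ucp_def)
  have p0add: "\<And>w v. w \<in> ocarrier W2 \<Longrightarrow> v \<in> ocarrier W2 \<Longrightarrow> \<psi>0 (oadd W2 w v) = oadd V (\<psi>0 w) (\<psi>0 v)"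
    using u\<psi>0 by (simp add: ucp_def)
  have p0smul: "\<And>w c. w \<in> ocarrier W2 \<Longrightarrow> \<psi>0 (osmul W2 c w) = osmul V c (\<psi>0 w)"
    using u\<psi>0 by (simp add: ucp_def)
  have p0unit: "\<psi>0 (ounit W2) = ounit V" using u\<psi>0 by (simp add: ucp_def)
  have p0pos: "\<And>n X. n > 0 \<Longrightarrow> X \<in> opos W2 n \<Longrightarrow> mmap V n \<psi>0 X \<in> opos V n" using u\<psi>0 by (simp add: ucp_def)
  have a2add: "\<And>g w v. g \<in> carrier G \<Longrightarrow> w \<in> ocarrier W2 \<Longrightarrow> v \<in> ocarrier W2 \<Longrightarrow> act g (oadd W2 w v) = oadd W2 (act g w) (act g v)"
    using a2 by (simp add: ucp_def)
  have a2smul: "\<And>g w c. g \<in> carrier G \<Longrightarrow> w \<in> ocarrier W2 \<Longrightarrow> act g (osmul W2 c w) = osmul W2 c (act g w)"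
    using a2 by (simp add: ucp_def)
  have a2unit: "\<And>g. g \<in> carrier G \<Longrightarrow> act g (ounit W2) = ounit W2" using a2 by (simp add: ucp_def)
  have a2pos: "\<And>g n X. g \<in> carrier G \<Longrightarrow> n > 0 \<Longrightarrow> X \<in> opos W2 n \<Longrightarrow> mmap W2 n (act g) X \<in> opos W2 n"
    using a2 by (simp add: ucp_def)
  have ipc: "\<And>x. x \<in> lcosets H \<Longrightarrow> inv (\<pi> x) \<in> carrier G" using pi_c by simp
  have \<psi>c: "\<psi> w \<in> ocarrier W" if w: "w \<in> ocarrier W2" for w
  proof -
    obtain R where R: "bmat W2 R w \<in> opos W2 2" using osys.bmat_exists[OF os2 w] by blast
    have "\<forall>x\<in>lcosets H. bmat V R (\<psi> w x) \<in> opos V 2"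
    proof
      fix x assume x: "x \<in> lcosets H"
      have "bmat W2 R (act (inv (\<pi> x)) w) \<in> opos W2 2"
        by (rule ucp_bmat[OF os2 os2 a2[OF ipc[OF x]] w R])
      hence "bmat V R (\<psi>0 (act (inv (\<pi> x)) w)) \<in> opos V 2"
        by (rule ucp_bmat[OF os2 V_os u\<psi>0 a2c[OF ipc[OF x] w]])
      thus "bmat V R (\<psi> w x) \<in> opos V 2" using x by (simp add: \<psi>_def)
    qed
    moreover have "\<forall>x\<in>lcosets H. \<psi> w x \<in> ocarrier V" using p0c a2c ipc w by (simp add: \<psi>_def)
    ultimately show ?thesis by (auto simp: V.Wc_iff \<psi>_def)
  qed
  have u\<psi>: "ucp W2 W \<psi>"
    unfolding ucp_def
  proof (intro conjI ballI allI impI)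
    fix x assume "x \<in> ocarrier W2" thus "\<psi> x \<in> ocarrier W" by (rule \<psi>c)
  next
    fix w v assume w: "w \<in> ocarrier W2" and v: "v \<in> ocarrier W2"
    show "\<psi> (oadd W2 w v) = oadd W (\<psi> w) (\<psi> v)"
      using w v a2add a2c p0add ipc by (intro ext) (simp add: \<psi>_def)
  next
    fix c w assume w: "w \<in> ocarrier W2"
    show "\<psi> (osmul W2 c w) = osmul W c (\<psi> w)"
      using w a2smul a2c p0smul ipc by (intro ext) (simp add: \<psi>_def)
  next
    show "\<psi> (ounit W2) = ounit W" using a2unit p0unit ipc by (intro ext) (simp add: \<psi>_def)
  next
    fix n :: nat and X assume n: "n > 0" and X: "X \<in> opos W2 n"
    have Xc: "\<And>i j. i < n \<Longrightarrow> j < n \<Longrightarrow> X i j \<in> ocarrier W2" using osys.pos_in[OF os2 X n] by blast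
    have "mmap W n \<psi> X \<in> mats W n"
      unfolding mats_def
    proof (intro CollectI allI conjI impI)
      fix i j assume "i < n \<and> j < n"
      thus "mmap W n \<psi> X i j \<in> ocarrier W" using \<psi>c[OF Xc] by (simp add: mmap_def)
    next
      fix i j assume "\<not> (i < n \<and> j < n)"
      thus "mmap W n \<psi> X i j = ozero W" by (auto simp: mmap_def)
    qed
    moreover have "(\<lambda>i j. mmap W n \<psi> X i j x) \<in> opos V n" if x: "x \<in> lcosets H" for x
    proof -
      have "(\<lambda>i j. mmap W n \<psi> X i j x) = mmap V n \<psi>0 (mmap W2 n (act (inv (\<pi> x))) X)"
        using x by (intro ext) (simp add: mmap_def \<psi>_def)
      thus ?thesis using p0pos[OF n a2pos[OF ipc[OF x] n X]] by simp
    qed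
    ultimately show "mmap W n \<psi> X \<in> opos W n" by (simp add: V.W_pos)
  qed
  have pe: "\<And>h w. h \<in> H \<Longrightarrow> w \<in> ocarrier W2 \<Longrightarrow> \<psi>0 (act h w) = actV h (\<psi>0 w)"
    using e\<psi>0 by (simp add: equivariant_def)
  have e\<psi>: "equivariant G W2 act ind \<psi>"
    unfolding equivariant_def
  proof (intro ballI ext)
    fix g w x assume g: "g \<in> carrier G" and w: "w \<in> ocarrier W2"
    show "\<psi> (act g w) x = ind g (\<psi> w) x"
    proof (cases "x \<in> lcosets H")
      case x: True
      define y where "y = inv g <# x"
      have y: "y \<in> lcosets H" using yL[OF g x] by (simp add: y_def)
      have gy: "g <# y = x" using L_cancel_inv[OF x g] by (simp add: y_def)
      define c where "c = cocycle G \<pi> y g"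
      have cH: "c \<in> H" using cocycle_c[OF y g] by (simp add: c_def)
      have cG: "c \<in> carrier G" using cH H_sub by blast
      have cc: "c \<otimes> inv (\<pi> y) = inv (\<pi> x) \<otimes> g"
        using gy pi_c[OF y] pi_c[OF x] g by (simp add: c_def cocycle_def m_assoc)
      have "ind g (\<psi> w) x = actV c (\<psi>0 (act (inv (\<pi> y)) w))"
        using x y by (simp add: ind_in y_def[symmetric] c_def \<psi>_def)
      also have "\<dots> = \<psi>0 (act c (act (inv (\<pi> y)) w))"
        using pe[OF cH a2c[OF ipc[OF y] w]] by simp
      also have "\<dots> = \<psi>0 (act (inv (\<pi> x) \<otimes> g) w)"
        using a2m[OF cG ipc[OF y] w] cc by simp
      also have "\<dots> = \<psi> (act g w) x"
        using a2m[OF ipc[OF x] g w] x by (simp add: \<psi>_def)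
      finally show ?thesis by simp
    next
      case False
      thus ?thesis by (simp add: \<psi>_def ind_out)
    qed
  qed
  have ag: "\<forall>x\<in>ocarrier W1. \<psi> x = \<phi> x"
  proof (intro ballI ext)
    fix w x assume w: "w \<in> ocarrier W1"
    show "\<psi> w x = \<phi> w x"
    proof (cases "x \<in> lcosets H")
      case x: True
      have pG: "\<pi> x \<in> carrier G" by (rule pi_c[OF x])
      have aw: "act (inv (\<pi> x)) w \<in> ocarrier W1" by (rule a1c[OF ipc[OF x] w])
      have "\<psi> w x = \<phi>0 (act (inv (\<pi> x)) w)" using x ag0 aw by (simp add: \<psi>_def)
      also have "\<dots> = ind (inv (\<pi> x)) (\<phi> w) H"
        using e\<phi> ipc[OF x] w by (simp add: equivariant_def \<phi>0_def)
      also have "\<dots> = actV (cocycle G \<pi> x (inv (\<pi> x))) (\<phi> w x)"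
        using H_L pG pi_coset[OF x] by (simp add: ind_in)
      also have "cocycle G \<pi> x (inv (\<pi> x)) = \<one>"
        using pi_inv_H[OF x] pi_H pG by (simp add: cocycle_def)
      finally show ?thesis using act_one V.Wc_val[OF \<phi>c[OF w]] by simp
    next
      case False
      thus ?thesis using \<phi>c[OF w] by (simp add: \<psi>_def V.Wc_iff)
    qed
  qed
  show ?thesis using u\<psi> e\<psi> ag by blast
qed

end


theorem lemma3p10:
  fixes G :: "('g, 'm) monoid_scheme" and H :: "'g set"
    and V :: "'v opsys" and actV :: "'g \<Rightarrow> 'v \<Rightarrow> 'v"
    and \<pi> :: "'g set \<Rightarrow> 'g"
  assumes "group G"
    and "subgroup H G"
    and "G_injective (G\<lparr>carrier := H\<rparr>) V actV TYPE('w)"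
    and "\<forall>x\<in>lcosets\<^bsub>G\<^esub> H. \<pi> x \<in> x"
    and "\<pi> H = \<one>\<^bsub>G\<^esub>"
  shows "G_injective G (linf G H V) (ind_act G H \<pi> V actV) TYPE('w)"
proof -
  have Hsys: "G_opsys (G\<lparr>carrier := H\<rparr>) V actV" using assms(3) by (simp add: G_injective_def)
  interpret indctx G H \<pi>
    by (rule indctx.intro[OF assms(1)]) (simp add: indctx_axioms_def assms(2,4,5))
  interpret indctx2 G H \<pi> V actV
    by unfold_locales (rule Hsys)
  show ?thesis
    unfolding G_injective_def
  proof (intro conjI allI impI)
    show "G_opsys G (linf G H V) (ind_act G H \<pi> V actV)" by (rule ind_Gsys)
  next
    fix W1 W2 :: "'w opsys" and act :: "'g \<Rightarrow> 'w \<Rightarrow> 'w" and \<phi> :: "'w \<Rightarrow> 'g set \<Rightarrow> 'v"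
    assume A: "G_opsys G W1 act \<and> G_opsys G W2 act \<and> subsystem W1 W2 \<and> ucp W1 (linf G H V) \<phi>
       \<and> equivariant G W1 act (ind_act G H \<pi> V actV) \<phi>"
    show "\<exists>\<psi>. ucp W2 (linf G H V) \<psi> \<and> equivariant G W2 act (ind_act G H \<pi> V actV) \<psi> \<and> (\<forall>x\<in>ocarrier W1. \<psi> x = \<phi> x)"
      using main_ext[OF assms(3)] A by blast
  qed
qed

end
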